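(* Let $d\ge 3$ and $1\le n\le d-1$ be integers. For $x_1,\dots,x_n\in S^{d-1}$ and $r>0$, let $D_r(x_1,\dots,x_n)$ denote the average of $1/\mathrm{Det}(y_1,\dots,y_n)$ over $(y_1,\dots,y_n)\in B_r(x_1)\times\cdots\times B_r(x_n)$ (with respect to the normalized restriction of $\pi^n$). Then there is a constant $C_{n,d}>0$, depending only on $n$ and $d$, such that $$D_r(x_1,\dots,x_n)\,\mathrm{Det}(x_1,\dots,x_n)<C_{n,d}$$ for all $r>0$ and all $x_1,\dots,x_n\in S^{d-1}$.
   Context: $S^{d-1}$ is the unit sphere in $\mathbb{R}^d$ and $\pi$ the uniform probability measure on it. $B_r(x)=\{y\in S^{d-1}: \text{spherical distance of } x,y <r\}$. For vectors $y_1,\dots,y_m\in\mathbb{R}^d$, $\mathrm{Det}(y_1,\dots,y_m)=\sqrt{\det\big((y_i^{\top}y_j)_{i,j=1}^m\big)}$, the $m$-dimensional volume of the parallelepiped spanned by them. *)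

theory Defs
  imports "HOL-Analysis.Analysis"
begin

text \<open>Uniform probability measure on the unit sphere S^{d-1} of a Euclidean space,
  defined as the normalized cone measure: pi(A) = vol{t x : 0 < t <= 1, x in A} / vol(unit ball).\<close>
definition sphere_measure :: "'a::euclidean_space measure" where
  "sphere_measure =
     measure_of (sphere 0 1) (sets (restrict_space borel (sphere 0 1)))
       (\<lambda>A. emeasure lborel {t *\<^sub>R x | t x. 0 < t \<and> t \<le> 1 \<and> x \<in> A}
             / emeasure lborel (ball (0::'a) 1))"

definition sph_dist :: "'a::euclidean_space \<Rightarrow> 'a \<Rightarrow> real" where
  "sph_dist x y = arccos (x \<bullet> y)"

definition sph_cap :: "real \<Rightarrow> 'a::euclidean_space \<Rightarrow> 'a set" where
  "sph_cap r x = {y \<in> sphere 0 1. sph_dist x y < r}"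

definition Det :: "('n::finite \<Rightarrow> real ^ 'd) \<Rightarrow> real" where
  "Det y = sqrt (det (\<chi> i j. y i \<bullet> y j))"

text \<open>D_r(x_1,...,x_n): average of 1/Det over B_r(x_1) x ... x B_r(x_n) w.r.t. pi^n
  (1/0 interpreted as infinity).\<close>
definition D :: "real \<Rightarrow> ('n::finite \<Rightarrow> real ^ 'd) \<Rightarrow> ennreal" where
  "D r x =
     (let M = PiM UNIV (\<lambda>_::'n. sphere_measure :: (real ^ 'd) measure);
          B = PiE UNIV (\<lambda>i. sph_cap r (x i))
      in (\<integral>\<^sup>+ y \<in> B. inverse (ennreal (Det y)) \<partial>M) / emeasure M B)"

end

theory Submission
  imports Defs "HOL-Analysis.Analysis"
begin

definition gramS :: "'n set \<Rightarrow> ('n::finite \<Rightarrow> real^'d) \<Rightarrow> real^'n^'n" where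
  "gramS S y = (\<chi> i j. if i \<in> S \<and> j \<in> S then y i \<bullet> y j else if i = j then 1 else 0)"

definition DetS :: "'n set \<Rightarrow> ('n::finite \<Rightarrow> real^'d) \<Rightarrow> real" where
  "DetS S y = sqrt (det (gramS S y))"

lemma Det_DetS: "Det y = DetS UNIV y"
  unfolding Det_def DetS_def gramS_def by simp

lemma gramS_empty: "gramS {} y = mat 1"
  unfolding gramS_def mat_def by (simp add: vec_eq_iff)

lemma DetS_empty: "DetS {} y = 1"
  unfolding DetS_def gramS_empty by simp

lemma gramS_cong: "(\<And>i. i \<in> S \<Longrightarrow> y i = z i) \<Longrightarrow> gramS S y = gramS S z"
  unfolding gramS_def by (simp cong: if_cong conj_cong)

lemma DetS_cong: "(\<And>i. i \<in> S \<Longrightarrow> y i = z i) \<Longrightarrow> DetS S y = DetS S z"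
  unfolding DetS_def using gramS_cong by metis

lemma gramS_row_span:
  fixes y :: "'n::finite \<Rightarrow> real^'d"
  assumes k: "k \<in> S" and v: "v \<in> span (y ` (S - {k}))"
  shows "det (gramS S (y(k := y k + v))) = det (gramS S y)"
proof -
  define G where "G = gramS S y"
  define y' where "y' = y(k := y k + v)"
  define L where "L = (\<lambda>u::real^'d. (\<chi> b. if b \<in> S then u \<bullet> y b else 0) :: real^'n)"
  define L' where "L' = (\<lambda>u::real^'d. (\<chi> b. if b \<in> S then u \<bullet> y' b else 0) :: real^'n)"
  have linL: "linear L" unfolding L_def
    by (rule linearI) (auto simp: vec_eq_iff inner_add_left)
  have linL': "linear L'" unfolding L'_def
    by (rule linearI) (auto simp: vec_eq_iff inner_add_left)
  have rowG: "row j G = L (y j)" if "j \<in> S" "j \<noteq> k" for j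
    using that unfolding G_def gramS_def L_def row_def by (simp add: vec_eq_iff)
  have a1: "L v \<in> span (L ` (y ` (S - {k})))"
    using span_linear_image[OF linL] v by blast
  have a2: "L ` (y ` (S - {k})) \<subseteq> {row j G |j. j \<noteq> k}"
    using rowG by (auto, metis)
  have sp1: "L v \<in> vec.span {row j G |j. j \<noteq> k}"
    unfolding span_vec_eq using span_mono[OF a2] a1 by blast
  define M1 where "M1 = (\<chi> a. if a = k then row k G + L v else row a G)"
  have d1: "det M1 = det G" unfolding M1_def by (rule det_row_span[OF sp1])
  define M2 where "M2 = transpose M1"
  have d2: "det M2 = det G" using d1 by (simp add: M2_def det_transpose)
  have rowM2: "row j M2 = L' (y j)" if "j \<in> S" "j \<noteq> k" for j
    using that k unfolding M2_def M1_def G_def gramS_def L_def L'_def row_def transpose_def y'_def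
    by (auto simp: vec_eq_iff inner_commute inner_add_left inner_add_right)
  have a1: "L' v \<in> span (L' ` (y ` (S - {k})))"
    using span_linear_image[OF linL'] v by blast
  have a2: "L' ` (y ` (S - {k})) \<subseteq> {row j M2 |j. j \<noteq> k}"
    using rowM2 by (auto, metis)
  have sp2: "L' v \<in> vec.span {row j M2 |j. j \<noteq> k}"
    unfolding span_vec_eq using span_mono[OF a2] a1 by blast
  define M3 where "M3 = (\<chi> a. if a = k then row k M2 + L' v else row a M2)"
  have d3: "det M3 = det G" unfolding M3_def using det_row_span[OF sp2] d2 by simp
  have "M3 = gramS S y'"
    using k unfolding M3_def M2_def M1_def G_def gramS_def L_def L'_def row_def transpose_def y'_def
    by (auto simp: vec_eq_iff inner_commute inner_add_left inner_add_right)
  then show ?thesis using d3 unfolding y'_def G_def by simp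
qed

lemma gramS_orth:
  fixes y :: "'n::finite \<Rightarrow> real^'d"
  assumes k: "k \<in> S" and orth: "\<And>j. j \<in> S - {k} \<Longrightarrow> y k \<bullet> y j = 0"
  shows "det (gramS S y) = (y k \<bullet> y k) * det (gramS (S - {k}) y)"
proof -
  define G' where "G' = gramS (S - {k}) y"
  have "gramS S y = (\<chi> i. if i = k then (y k \<bullet> y k) *s row i G' else row i G')"
    using k orth unfolding G'_def gramS_def row_def
    by (auto simp: vec_eq_iff inner_commute)
  then have "det (gramS S y) = (y k \<bullet> y k) * det (\<chi> i. if i = k then row i G' else row i G')"
    using det_row_mul[of k "y k \<bullet> y k" "\<lambda>i. row i G'" "\<lambda>i. row i G'"] by simp
  also have "(\<chi> i. if i = k then row i G' else row i G') = G'"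
    by (simp add: row_def vec_eq_iff)
  finally show ?thesis unfolding G'_def .
qed

lemma infdist_orth_decomp:
  fixes x :: "'a::euclidean_space"
  assumes p: "p \<in> span X" and q: "\<And>w. w \<in> span X \<Longrightarrow> orthogonal q w" and x: "x = p + q"
  shows "infdist x (span X) = norm q"
proof (rule antisym)
  show "infdist x (span X) \<le> norm q"
    using infdist_le[OF p, of x] x by (simp add: dist_norm)
  have "norm q \<le> dist x a" if a: "a \<in> span X" for a
  proof -
    have pa: "p - a \<in> span X" using p a by (simp add: span_diff)
    have xa: "x - a = q + (p - a)" using x by simp
    have "(norm (q + (p - a)))\<^sup>2 = (norm q)\<^sup>2 + (norm (p - a))\<^sup>2"
      by (rule norm_add_Pythagorean) (use q[OF pa] in \<open>simp add: orthogonal_def\<close>)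
    then have "(norm (x - a))\<^sup>2 = (norm q)\<^sup>2 + (norm (p - a))\<^sup>2" by (simp only: xa)
    then have "(norm q)\<^sup>2 \<le> (norm (x - a))\<^sup>2" by simp
    then show ?thesis by (simp add: dist_norm power2_le_iff_abs_le)
  qed
  moreover have "span X \<noteq> {}" using span_zero by blast
  ultimately show "norm q \<le> infdist x (span X)"
    unfolding infdist_def by (auto intro!: cINF_greatest)
qed

lemma infdist_span_add:
  fixes a b :: "'a::euclidean_space"
  shows "infdist (a + b) (span X) \<le> infdist a (span X) + infdist b (span X)"
proof -
  obtain pa qa where pa: "pa \<in> span X" "\<And>w. w \<in> span X \<Longrightarrow> orthogonal qa w" "a = pa + qa"
    using orthogonal_subspace_decomp_exists[where S=X and x=a] by blast
  obtain pb qb where pb: "pb \<in> span X" "\<And>w. w \<in> span X \<Longrightarrow> orthogonal qb w" "b = pb + qb"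
    using orthogonal_subspace_decomp_exists[where S=X and x=b] by blast
  have "infdist (a + b) (span X) = norm (qa + qb)"
    by (rule infdist_orth_decomp[where p="pa+pb"])
       (use pa pb in \<open>auto simp: span_add orthogonal_clauses\<close>)
  also have "\<dots> \<le> norm qa + norm qb" by (rule norm_triangle_ineq)
  also have "\<dots> = infdist a (span X) + infdist b (span X)"
    using infdist_orth_decomp[OF pa] infdist_orth_decomp[OF pb] by simp
  finally show ?thesis .
qed

lemma infdist_span_le_norm: "infdist b (span X) \<le> norm b"
  using infdist_le[OF span_zero, of b X] by simp

lemma det_gramS_step:
  fixes y :: "'n::finite \<Rightarrow> real^'d"
  assumes k: "k \<in> S"
  shows "det (gramS S y) = (infdist (y k) (span (y ` (S - {k}))))\<^sup>2 * det (gramS (S - {k}) y)"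
proof -
  obtain p q where pq: "p \<in> span (y ` (S - {k}))" "\<And>w. w \<in> span (y ` (S - {k})) \<Longrightarrow> orthogonal q w"
      "y k = p + q"
    using orthogonal_subspace_decomp_exists[where S="y ` (S - {k})" and x="y k"] by blast
  define y' where "y' = y(k := y k + - p)"
  have "- p \<in> span (y ` (S - {k}))" using pq(1) by (simp add: span_neg)
  then have d1: "det (gramS S y') = det (gramS S y)"
    unfolding y'_def by (rule gramS_row_span[OF k])
  have yk: "y' k = q" using pq(3) by (simp add: y'_def)
  have "det (gramS S y') = (y' k \<bullet> y' k) * det (gramS (S - {k}) y')"
  proof (rule gramS_orth[OF k])
    fix j assume j: "j \<in> S - {k}"
    then have "y j \<in> span (y ` (S - {k}))" by (intro span_base) auto
    then show "y' k \<bullet> y' j = 0" using pq(2) j yk by (auto simp: y'_def orthogonal_def)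
  qed
  also have "gramS (S - {k}) y' = gramS (S - {k}) y"
    by (rule gramS_cong) (auto simp: y'_def)
  also have "y' k \<bullet> y' k = (infdist (y k) (span (y ` (S - {k}))))\<^sup>2"
    using infdist_orth_decomp[OF pq] yk by (simp add: power2_norm_eq_inner)
  finally show ?thesis using d1 by simp
qed

lemma det_gramS_nonneg:
  fixes y :: "'n::finite \<Rightarrow> real^'d"
  shows "0 \<le> det (gramS S y)"
proof -
  have "finite S" by simp
  then show ?thesis
  proof (induction "card S" arbitrary: S)
    case 0
    then have "S = {}" by simp
    then show ?case by (simp add: gramS_empty)
  next
    case (Suc m)
    then obtain k where k: "k \<in> S" by (metis card.empty ex_in_conv nat.distinct(1))
    have "0 \<le> det (gramS (S - {k}) y)"
      using Suc.hyps(1)[of "S - {k}"] Suc.hyps(2) k Suc.prems by simp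
    then show ?case using det_gramS_step[OF k, of y] by simp
  qed
qed

lemma DetS_nonneg: "0 \<le> DetS S y"
  unfolding DetS_def using det_gramS_nonneg by simp

lemma DetS_step:
  fixes y :: "'n::finite \<Rightarrow> real^'d"
  assumes k: "k \<in> S"
  shows "DetS S y = infdist (y k) (span (y ` (S - {k}))) * DetS (S - {k}) y"
  unfolding DetS_def det_gramS_step[OF k] real_sqrt_mult by (simp add: infdist_nonneg)

lemma DetS_sub:
  fixes y :: "'n::finite \<Rightarrow> real^'d"
  assumes k: "k \<in> S"
  shows "DetS S (y(k := a + b)) \<le> DetS S (y(k := a)) + norm b * DetS (S - {k}) y"
proof -
  let ?W = "span (y ` (S - {k}))"
  have im: "(y(k := u)) ` (S - {k}) = y ` (S - {k})" for u by auto
  have c: "DetS (S - {k}) (y(k := u)) = DetS (S - {k}) y" for u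
    by (rule DetS_cong) auto
  have e: "DetS S (y(k := u)) = infdist u ?W * DetS (S - {k}) y" for u
    using DetS_step[OF k, of "y(k := u)"] im c by simp
  have "infdist (a + b) ?W \<le> infdist a ?W + norm b"
    using infdist_span_add[of a b "y ` (S - {k})"] infdist_span_le_norm[of b "y ` (S - {k})"] by linarith
  then have "infdist (a + b) ?W * DetS (S - {k}) y \<le> (infdist a ?W + norm b) * DetS (S - {k}) y"
    using DetS_nonneg[of "S - {k}" y] by (rule mult_right_mono)
  then show ?thesis unfolding e by (simp add: distrib_right)
qed

lemma DetS_term_nonneg: "0 \<le> \<rho> \<Longrightarrow> 0 \<le> \<rho> ^ m * DetS T y"
  by (simp add: DetS_nonneg)

lemma DetS_expand_aux:
  fixes y :: "'n::finite \<Rightarrow> real^'d"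
  assumes "0 \<le> \<rho>"
  shows "card {i\<in>S. z i \<noteq> y i} = m \<Longrightarrow> (\<forall>i\<in>S. norm (z i - y i) \<le> \<rho>) \<Longrightarrow>
    DetS S z \<le> 2 ^ m * (\<Sum>T\<in>Pow S. \<rho> ^ card (S - T) * DetS T y)"
proof (induction m arbitrary: S z)
  case 0
  then have eq: "\<forall>i\<in>S. z i = y i" by auto
  have "DetS S z = \<rho> ^ card (S - S) * DetS S y"
    using DetS_cong[of S z y] eq by simp
  also have "\<dots> \<le> (\<Sum>T\<in>Pow S. \<rho> ^ card (S - T) * DetS T y)"
    by (rule member_le_sum) (use assms DetS_term_nonneg in auto)
  finally show ?case by simp
next
  case (Suc m)
  have "{i\<in>S. z i \<noteq> y i} \<noteq> {}" using Suc.prems(1) by (metis card.empty nat.simps(3))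
  then obtain k where k: "k \<in> S" "z k \<noteq> y k" by blast
  define z0 where "z0 = z(k := y k)"
  have zz: "z = z0(k := y k + (z k - y k))" by (simp add: z0_def)
  have "{i\<in>S. z0 i \<noteq> y i} = {i\<in>S. z i \<noteq> y i} - {k}" by (auto simp: z0_def)
  then have c1: "card {i\<in>S. z0 i \<noteq> y i} = m" using Suc.prems(1) k by simp
  have "{i\<in>S - {k}. z0 i \<noteq> y i} = {i\<in>S. z i \<noteq> y i} - {k}" by (auto simp: z0_def)
  then have c2: "card {i\<in>S - {k}. z0 i \<noteq> y i} = m" using Suc.prems(1) k by simp
  have b0: "\<forall>i\<in>S. norm (z0 i - y i) \<le> \<rho>" using Suc.prems(2) assms by (auto simp: z0_def)
  let ?F = "\<lambda>S. (\<Sum>T\<in>Pow S. \<rho> ^ card (S - T) * DetS T y)"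
  have "DetS S z \<le> DetS S (z0(k := y k)) + norm (z k - y k) * DetS (S - {k}) z0"
    using DetS_sub[OF k(1), of z0 "y k" "z k - y k"] zz by simp
  also have "z0(k := y k) = z0" by (simp add: z0_def)
  also have "DetS S z0 \<le> 2 ^ m * ?F S" using Suc.IH[OF c1 b0] .
  also have "norm (z k - y k) * DetS (S - {k}) z0 \<le> \<rho> * (2 ^ m * ?F (S - {k}))"
    using Suc.IH[OF c2] b0 Suc.prems(2) k DetS_nonneg[of "S - {k}" z0] assms
    by (intro mult_mono) auto
  also have "\<rho> * (2 ^ m * ?F (S - {k})) \<le> 2 ^ m * ?F S"
  proof -
    have "\<rho> * ?F (S - {k}) = (\<Sum>T\<in>Pow (S - {k}). \<rho> ^ card (S - T) * DetS T y)"
      unfolding sum_distrib_left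
    proof (rule sum.cong)
      fix T assume T: "T \<in> Pow (S - {k})"
      have "S - T = insert k (S - {k} - T)" using T k by auto
      then have "card (S - T) = Suc (card (S - {k} - T))" using T by simp
      then show "\<rho> * (\<rho> ^ card (S - {k} - T) * DetS T y) = \<rho> ^ card (S - T) * DetS T y" by simp
    qed simp
    also have "\<dots> \<le> ?F S"
      by (rule sum_mono2) (use assms DetS_term_nonneg in auto)
    finally show ?thesis by (simp add: mult.left_commute)
  qed
  finally show ?case by simp
qed

lemma DetS_expand:
  fixes y z :: "'n::finite \<Rightarrow> real^'d"
  assumes "0 \<le> \<rho>" "\<forall>i. norm (z i - y i) \<le> \<rho>"
  shows "DetS UNIV z \<le> 2 ^ CARD('n) * (\<Sum>T\<in>Pow UNIV. \<rho> ^ card (UNIV - T) * DetS T y)"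
proof -
  have "DetS UNIV z \<le> 2 ^ card {i\<in>UNIV. z i \<noteq> y i} * (\<Sum>T\<in>Pow UNIV. \<rho> ^ card (UNIV - T) * DetS T y)"
    using DetS_expand_aux[OF assms(1)] assms(2) by blast
  also have "\<dots> \<le> 2 ^ CARD('n) * (\<Sum>T\<in>Pow UNIV. \<rho> ^ card (UNIV - T) * DetS T y)"
    by (intro mult_right_mono power_increasing sum_nonneg)
       (use assms DetS_term_nonneg in \<open>auto intro: card_mono\<close>)
  finally show ?thesis .
qed


definition scone :: "'a::euclidean_space set \<Rightarrow> 'a set" where
  "scone A = {t *\<^sub>R x | t x. 0 < t \<and> t \<le> 1 \<and> x \<in> A}"

lemma scone_eq:
  fixes A :: "'a::euclidean_space set"
  assumes "A \<subseteq> sphere 0 1"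
  shows "scone A = {w. w \<noteq> 0 \<and> norm w \<le> 1 \<and> sgn w \<in> A}"
proof (rule set_eqI, rule iffI)
  fix w assume "w \<in> scone A"
  then obtain t x where w: "w = t *\<^sub>R x" "0 < t" "t \<le> 1" "x \<in> A" unfolding scone_def by auto
  have nx: "norm x = 1" using w(4) assms by auto
  have "sgn w = x" using w nx by (simp add: sgn_div_norm)
  then show "w \<in> {w. w \<noteq> 0 \<and> norm w \<le> 1 \<and> sgn w \<in> A}" using w nx by auto
next
  fix w :: 'a assume "w \<in> {w. w \<noteq> 0 \<and> norm w \<le> 1 \<and> sgn w \<in> A}"
  then have w: "w \<noteq> 0" "norm w \<le> 1" "sgn w \<in> A" by auto
  have "w = norm w *\<^sub>R sgn w" using w by (simp add: sgn_div_norm)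
  then show "w \<in> scone A" unfolding scone_def using w by force
qed

lemma scone_mono: "A \<subseteq> B \<Longrightarrow> scone A \<subseteq> scone B"
  unfolding scone_def by blast

lemma scone_UN: "scone (\<Union>i. A i) = (\<Union>i. scone (A i))"
  unfolding scone_def by blast

lemma sphere_sets_iff:
  "A \<in> sets (restrict_space borel (sphere (0::'a::euclidean_space) 1)) \<longleftrightarrow> A \<subseteq> sphere 0 1 \<and> A \<in> sets borel"
  by (rule sets_restrict_space_iff) (simp add: closed_sphere)

lemma scone_borel:
  fixes A :: "'a::euclidean_space set"
  assumes "A \<in> sets (restrict_space borel (sphere (0::'a) 1))"
  shows "scone A \<in> sets borel"
proof -
  have A: "A \<subseteq> sphere 0 1" "A \<in> sets borel" using assms sphere_sets_iff by auto
  have "scone A = {w. w \<noteq> 0} \<inter> {w. norm w \<le> 1} \<inter> sgn -` A"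
    using scone_eq[OF A(1)] by auto
  also have "\<dots> \<in> sets borel"
    using A(2) by (intro sets.Int) (auto intro!: measurable_sets_borel[OF borel_measurable_sgn])
  finally show ?thesis .
qed

lemma sigma_alg_sphere:
  "sigma_algebra (sphere (0::'a::euclidean_space) 1) (sets (restrict_space borel (sphere (0::'a) 1)))"
proof -
  have "space (restrict_space borel (sphere (0::'a) 1)) = sphere 0 1" by (simp add: space_restrict_space)
  then show ?thesis using sets.sigma_algebra_axioms[of "restrict_space borel (sphere (0::'a) 1)"] by simp
qed

lemma sets_sphere_measure:
  "sets (sphere_measure :: 'a::euclidean_space measure) = sets (restrict_space borel (sphere (0::'a) 1))"
proof -
  interpret sigma_algebra "sphere (0::'a) 1" "sets (restrict_space borel (sphere (0::'a) 1))"
    by (rule sigma_alg_sphere)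
  show ?thesis unfolding sphere_measure_def
    by (subst sets_measure_of[OF space_closed]) (simp add: sigma_sets_eq)
qed

lemma space_sphere_measure: "space (sphere_measure :: 'a::euclidean_space measure) = sphere 0 1"
proof -
  have "sets (restrict_space borel (sphere (0::'a) 1)) \<subseteq> Pow (sphere 0 1)"
    using sets.space_closed[of "restrict_space borel (sphere (0::'a) 1)"] by (simp add: space_restrict_space)
  then show ?thesis unfolding sphere_measure_def by (simp add: space_measure_of_conv)
qed

lemma ball_pos: "0 < emeasure lborel (ball (0::'a::euclidean_space) 1)"
  by (simp add: emeasure_ball unit_ball_vol_pos)

lemma ball_fin: "emeasure lborel (ball (0::'a::euclidean_space) 1) \<noteq> \<infinity>"
  using emeasure_lborel_ball_finite by (metis less_irrefl)

lemma emeasure_sphere_measure: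
  fixes A :: "'a::euclidean_space set"
  assumes "A \<in> sets sphere_measure"
  shows "emeasure sphere_measure A = emeasure lborel (scone A) / emeasure lborel (ball (0::'a) 1)"
proof -
  let ?\<mu> = "\<lambda>A::'a set. emeasure lborel {t *\<^sub>R x | t x. 0 < t \<and> t \<le> 1 \<and> x \<in> A}
             / emeasure lborel (ball (0::'a) 1)"
  let ?M = "sets (restrict_space borel (sphere (0::'a) 1))"
  have pos: "positive ?M ?\<mu>" unfolding positive_def by simp
  have ca: "countably_additive ?M ?\<mu>"
  proof (rule countably_additiveI)
    fix A :: "nat \<Rightarrow> 'a set"
    assume A: "range A \<subseteq> ?M" "disjoint_family A" "(\<Union>i. A i) \<in> ?M"
    have As: "A i \<subseteq> sphere 0 1" for i
    proof -
      have "A i \<in> ?M" using A(1) by auto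
      then show ?thesis by (simp add: sphere_sets_iff)
    qed
    have cb: "range (\<lambda>i. scone (A i)) \<subseteq> sets lborel" using A(1) scone_borel by auto
    have dj: "disjoint_family (\<lambda>i. scone (A i))"
      unfolding disjoint_family_on_def
    proof (intro ballI impI)
      fix i j :: nat assume "i \<noteq> j"
      then have "A i \<inter> A j = {}" using A(2) unfolding disjoint_family_on_def by auto
      then show "scone (A i) \<inter> scone (A j) = {}" unfolding scone_eq[OF As] scone_eq[OF As] by auto
    qed
    have "(\<Sum>i. ?\<mu> (A i)) = (\<Sum>i. emeasure lborel (scone (A i))) / emeasure lborel (ball (0::'a) 1)"
      unfolding scone_def[symmetric] by (rule ennreal_suminf_divide)
    also have "(\<Sum>i. emeasure lborel (scone (A i))) = emeasure lborel (\<Union>i. scone (A i))"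
      by (rule suminf_emeasure[OF cb dj])
    finally show "(\<Sum>i. ?\<mu> (A i)) = ?\<mu> (\<Union>i. A i)"
      unfolding scone_def[symmetric] scone_UN .
  qed
  have "A \<in> ?M" using assms by (simp add: sets_sphere_measure)
  then have "emeasure sphere_measure A = ?\<mu> A" unfolding sphere_measure_def
    by (rule emeasure_measure_of_sigma[OF sigma_alg_sphere pos ca])
  then show ?thesis by (simp only: scone_def)
qed

lemma sphere_measure_le:
  assumes "A \<in> sets sphere_measure"
  shows "emeasure (sphere_measure :: 'a::euclidean_space measure) A \<le> 1"
proof -
  have As: "A \<subseteq> sphere 0 1" using sets.sets_into_space[OF assms] by (simp add: space_sphere_measure)
  have "scone A \<subseteq> cball 0 1" unfolding scone_eq[OF As] by (auto simp: dist_norm)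
  then have "emeasure lborel (scone A) \<le> emeasure lborel (cball (0::'a) 1)"
    by (rule emeasure_mono) simp
  also have "\<dots> = emeasure lborel (ball (0::'a) 1)"
    using emeasure_ball[of 1 "0::'a"] emeasure_cball[of 1 "0::'a"] by simp
  finally have "emeasure lborel (scone A) / emeasure lborel (ball (0::'a) 1) \<le> 1"
    using ball_pos[where 'a='a] ball_fin[where 'a='a]
    by (simp add: divide_le_posI_ennreal)
  then show ?thesis using emeasure_sphere_measure[OF assms] by simp
qed


lemma finite_measure_sphere: "finite_measure (sphere_measure :: 'a::euclidean_space measure)"
proof (rule finite_measureI)
  have "space (sphere_measure :: 'a measure) \<in> sets sphere_measure" by simp
  then have "emeasure (sphere_measure :: 'a measure) (space sphere_measure) \<le> 1"
    by (rule sphere_measure_le)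
  then show "emeasure (sphere_measure :: 'a measure) (space sphere_measure) \<noteq> \<infinity>"
    by (metis ennreal_one_less_top infinity_ennreal_def le_less_trans less_irrefl)
qed

lemma arccos_less_iff: "-1 \<le> (c::real) \<Longrightarrow> c \<le> 1 \<Longrightarrow> 0 < r \<Longrightarrow> r \<le> pi \<Longrightarrow> (arccos c < r) = (cos r < c)"
  by (smt (verit) arccos cos_mono_less_eq)

lemma inner_sphere_bounds:
  fixes z y :: "'a::euclidean_space"
  assumes "norm z = 1" "norm y = 1"
  shows "-1 \<le> z \<bullet> y" "z \<bullet> y \<le> 1"
  using Cauchy_Schwarz_ineq2[of z y] assms by auto

lemma cap_eq:
  fixes z :: "'a::euclidean_space"
  assumes z: "norm z = 1" and r: "0 < r"
  shows "sph_cap r z = sphere 0 1 \<inter> {y. pi < r \<or> cos r < z \<bullet> y}"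
proof (rule set_eqI)
  fix y :: 'a
  show "y \<in> sph_cap r z \<longleftrightarrow> y \<in> sphere 0 1 \<inter> {y. pi < r \<or> cos r < z \<bullet> y}"
  proof (cases "y \<in> sphere 0 1")
    case True
    then have ny: "norm y = 1" by simp
    note b = inner_sphere_bounds[OF z ny]
    show ?thesis
    proof (cases "pi < r")
      case True
      have "arccos (z \<bullet> y) \<le> pi" using arccos_ubound b by blast
      then show ?thesis using True \<open>y \<in> sphere 0 1\<close> by (simp add: sph_cap_def sph_dist_def)
    next
      case False
      then show ?thesis using \<open>y \<in> sphere 0 1\<close> arccos_less_iff[OF b r] by (simp add: sph_cap_def sph_dist_def)
    qed
  qed (simp add: sph_cap_def)
qed

lemma cap_sets:
  fixes z :: "'a::euclidean_space"
  assumes z: "norm z = 1" and r: "0 < r"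
  shows "sph_cap r z \<in> sets (sphere_measure :: 'a measure)"
proof -
  have "sphere 0 1 \<inter> {y. pi < r \<or> cos r < z \<bullet> y} \<in> sets (restrict_space borel (sphere (0::'a) 1))"
    unfolding sphere_sets_iff by auto
  then show ?thesis using cap_eq[OF z r] by (simp add: sets_sphere_measure)
qed

lemma chord_le_arc:
  fixes z y :: "'a::euclidean_space"
  assumes z: "norm z = 1" and y: "norm y = 1"
  shows "norm (y - z) \<le> arccos (z \<bullet> y)"
proof -
  define \<theta> where "\<theta> = arccos (z \<bullet> y)"
  note b = inner_sphere_bounds[OF z y]
  have th: "0 \<le> \<theta>" "cos \<theta> = z \<bullet> y" using b arccos by (auto simp: \<theta>_def)
  have "(norm (y - z))\<^sup>2 = 2 - 2 * (z \<bullet> y)"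
  proof -
    have "y \<bullet> y = 1" "z \<bullet> z = 1" using z y by (simp_all add: norm_eq_1)
    then show ?thesis by (simp add: power2_norm_eq_inner inner_diff_left inner_diff_right inner_commute)
  qed
  also have "\<dots> = 4 * (sin (\<theta>/2))\<^sup>2"
    using th(2) by (smt (verit) cos_double_sin field_sum_of_halves)
  also have "\<dots> \<le> 4 * (\<theta>/2)\<^sup>2"
    using abs_sin_x_le_abs_x[of "\<theta>/2"] th(1)
    by (simp add: power2_le_iff_abs_le abs_le_square_iff)
  also have "\<dots> = \<theta>\<^sup>2" by (simp add: power2_eq_square)
  finally show ?thesis using th(1) unfolding \<theta>_def
    using power2_le_imp_le by blast
qed

lemma cap_chord:
  fixes z y :: "'a::euclidean_space"
  assumes z: "norm z = 1" and y: "y \<in> sph_cap r z"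
  shows "norm (y - z) \<le> min r 2"
proof -
  have ny: "norm y = 1" using y by (simp add: sph_cap_def)
  have "norm (y - z) \<le> r" using chord_le_arc[OF z ny] y by (simp add: sph_cap_def sph_dist_def)
  moreover have "norm (y - z) \<le> 2" using norm_triangle_ineq4[of y z] ny z by simp
  ultimately show ?thesis by simp
qed


lemma sin_lower: "0 \<le> x \<Longrightarrow> x \<le> 1 \<Longrightarrow> x / 2 \<le> sin (x::real)"
proof -
  assume a: "0 \<le> x" "x \<le> 1"
  have "\<bar>sin x - (\<Sum>m<3. sin_coeff m * x ^ m)\<bar> \<le> inverse (fact 3) * \<bar>x\<bar> ^ 3"
    by (rule Maclaurin_sin_bound)
  moreover have "(\<Sum>m<3. sin_coeff m * x ^ m) = x" by (simp add: sin_coeff_def numeral_3_eq_3)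
  moreover have "x^3 \<le> x"
  proof -
    have "x * x \<le> 1" using a by (simp add: mult_le_one)
    then have "x * x * x \<le> 1 * x" by (rule mult_right_mono) (use a in auto)
    then show ?thesis by (simp add: power3_eq_cube)
  qed
  ultimately have "\<bar>sin x - x\<bar> * 6 \<le> x" using a by (simp add: fact_numeral)
  then show ?thesis unfolding abs_le_iff abs_mult by (simp add: abs_if split: if_splits) 
qed

lemma cos_upper: "0 \<le> x \<Longrightarrow> x \<le> 1 \<Longrightarrow> cos (x::real) \<le> 1 - x\<^sup>2 / 8"
proof -
  assume a: "0 \<le> x" "x \<le> 1"
  have s: "x / 4 \<le> sin (x/2)" using sin_lower[of "x/2"] a by simp
  have "cos x = 1 - 2 * (sin (x/2))\<^sup>2" by (smt (verit) cos_double_sin field_sum_of_halves)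
  moreover have "(x/4)\<^sup>2 \<le> (sin (x/2))\<^sup>2" using s a by (intro power_mono) auto
  ultimately show ?thesis by (simp add: power2_eq_square)
qed

lemma sgn_diff_le:
  fixes w v :: "'a::real_normed_vector"
  assumes v: "v \<noteq> 0" and w: "w \<noteq> 0"
  shows "norm (sgn w - sgn v) \<le> 2 * norm (w - v) / norm v"
proof -
  have nv: "0 < norm v" using v by simp
  have "sgn w - sgn v = (w /\<^sub>R norm w - w /\<^sub>R norm v) + (w - v) /\<^sub>R norm v"
    by (simp add: sgn_div_norm algebra_simps)
  then have "norm (sgn w - sgn v) \<le> norm (w /\<^sub>R norm w - w /\<^sub>R norm v) + norm ((w - v) /\<^sub>R norm v)"
    by (metis norm_triangle_ineq)
  also have "norm (w /\<^sub>R norm w - w /\<^sub>R norm v) = \<bar>norm v - norm w\<bar> / norm v"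
  proof -
    have "w /\<^sub>R norm w - w /\<^sub>R norm v = ((norm v - norm w) / (norm w * norm v)) *\<^sub>R w"
      using v w by (simp add: field_simps scaleR_diff_left[symmetric] divide_simps)
    then show ?thesis using v w by (simp add: abs_mult)
  qed
  also have "\<bar>norm v - norm w\<bar> \<le> norm (w - v)" by (metis norm_triangle_ineq3 norm_minus_commute)
  then have "\<bar>norm v - norm w\<bar> / norm v \<le> norm (w - v) / norm v" using nv by (simp add: divide_right_mono)
  finally have "norm (sgn w - sgn v) \<le> norm (w - v) / norm v + norm (w - v) / norm v"
    by (simp add: divide_inverse mult.commute)
  then show ?thesis by simp
qed

lemma ball_in_scone:
  fixes z :: "'a::euclidean_space"
  assumes z: "norm z = 1" and r: "0 < r" and t: "1/2 \<le> t" "t \<le> 3/4"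
  shows "ball (t *\<^sub>R z) (min r 1 / 16) \<subseteq> scone (sph_cap r z)"
proof
  fix w assume "w \<in> ball (t *\<^sub>R z) (min r 1 / 16)"
  then have dw: "norm (w - t *\<^sub>R z) < min r 1 / 16" by (simp add: dist_norm norm_minus_commute)
  define r0 where "r0 = min r 1"
  have r0: "0 < r0" "r0 \<le> 1" "r0 \<le> r" using r by (auto simp: r0_def)
  have ntz: "norm (t *\<^sub>R z) = t" using z t by simp
  have "norm w \<le> norm (t *\<^sub>R z) + norm (w - t *\<^sub>R z)" by (metis norm_triangle_sub add.commute)
  then have nw1: "norm w \<le> 1" using dw ntz r0 t unfolding r0_def by linarith
  have "norm (t *\<^sub>R z) \<le> norm w + norm (w - t *\<^sub>R z)" by (metis norm_triangle_sub norm_minus_commute)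
  then have "0 < norm w" using dw ntz r0 t unfolding r0_def by linarith
  then have w0: "w \<noteq> 0" by auto
  have tz0: "t *\<^sub>R z \<noteq> 0" using ntz t by auto
  have sz: "sgn (t *\<^sub>R z) = z" using t z by (simp add: sgn_div_norm)
  define x where "x = sgn w"
  have nx: "norm x = 1" using w0 by (simp add: x_def norm_sgn)
  have "norm (x - z) \<le> 2 * norm (w - t *\<^sub>R z) / t"
    using sgn_diff_le[OF tz0 w0] sz ntz by (simp add: x_def)
  also have "\<dots> \<le> 2 * (r0 / 16) / (1/2)"
    using dw t r0 unfolding r0_def by (intro frac_le) auto
  finally have dxz: "norm (x - z) \<le> r0 / 4" by simp
  have "z \<bullet> x = 1 - (norm (x - z))\<^sup>2 / 2"
  proof -
    have "x \<bullet> x = 1" "z \<bullet> z = 1" using nx z by (simp_all add: norm_eq_1)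
    then have "(norm (x - z))\<^sup>2 = 2 - 2 * (z \<bullet> x)"
      by (simp add: power2_norm_eq_inner inner_diff_left inner_diff_right inner_commute)
    then show ?thesis by (simp add: field_simps)
  qed
  moreover have "(norm (x - z))\<^sup>2 \<le> (r0/4)\<^sup>2" using dxz by (intro power_mono) auto
  ultimately have "1 - r0\<^sup>2 / 32 \<le> z \<bullet> x" by (simp add: power2_eq_square)
  moreover have "cos r0 \<le> 1 - r0\<^sup>2 / 8" using cos_upper r0 by simp
  moreover have "0 < r0\<^sup>2" using r0 by simp
  ultimately have "cos r0 < z \<bullet> x" by linarith
  moreover note b = inner_sphere_bounds[OF z nx]
  moreover have "r0 \<le> pi" using r0 pi_gt3 by linarith
  ultimately have "arccos (z \<bullet> x) < r0" using arccos_less_iff[OF b r0(1)] by simp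
  then have "x \<in> sph_cap r z" using nx r0 by (simp add: sph_cap_def sph_dist_def)
  moreover have "sph_cap r z \<subseteq> sphere 0 1" by (auto simp: sph_cap_def)
  ultimately show "w \<in> scone (sph_cap r z)" using scone_eq w0 nw1 by (auto simp: x_def)
qed

lemma scone_cap_lower:
  fixes z :: "'a::euclidean_space"
  assumes z: "norm z = 1" and r: "0 < r"
  shows "ennreal (unit_ball_vol DIM('a) * (min r 2 / 32) ^ (DIM('a) - 1) / 16)
           \<le> emeasure lborel (scone (sph_cap r z))"
proof -
  define h where "h = min r 1 / 16"
  define N where "N = nat \<lfloor>1 / (8 * h)\<rfloor>"
  define v where "v = unit_ball_vol DIM('a)"
  have h: "0 < h" "h \<le> 1/16" using r by (auto simp: h_def)
  have v: "0 < v" using unit_ball_vol_pos by (simp add: v_def)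
  have "2 \<le> 1 / (8 * h)" using h by (simp add: field_simps)
  then have f0: "0 \<le> \<lfloor>1 / (8 * h)\<rfloor>" using h by simp
  have RN: "real N = real_of_int \<lfloor>1 / (8 * h)\<rfloor>" unfolding N_def using f0 by simp
  have N1: "1 / (8 * h) - 1 \<le> real N" "real N \<le> 1 / (8 * h)"
    unfolding RN using floor_correct[of "1 / (8 * h)"] by linarith+
  define F where "F j = ball ((1/2 + 2 * h * real j) *\<^sub>R z) h" for j
  have tj: "1/2 \<le> 1/2 + 2 * h * real j" "1/2 + 2 * h * real j \<le> 3/4" if "j < N" for j
  proof -
    show "1/2 \<le> 1/2 + 2 * h * real j" using h by simp
    have "real j \<le> real N - 1" using that by linarith
    also have "\<dots> \<le> 1 / (8 * h) - 1" using N1 by linarith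
    finally have "2 * h * real j \<le> 2 * h * (1 / (8 * h) - 1)" using h by (intro mult_left_mono) auto
    also have "\<dots> \<le> 1/4" using h by (simp add: field_simps)
    finally show "1/2 + 2 * h * real j \<le> 3/4" by simp
  qed
  have sub: "(\<Union>j\<in>{..<N}. F j) \<subseteq> scone (sph_cap r z)"
  proof (rule UN_least)
    fix j assume "j \<in> {..<N}"
    then have "j < N" by simp
    from ball_in_scone[OF z r tj[OF this]] show "F j \<subseteq> scone (sph_cap r z)"
      unfolding F_def h_def .
  qed
  have dj: "disjoint_family_on F {..<N}"
    unfolding disjoint_family_on_def
  proof (intro ballI impI)
    fix i j assume "i \<in> {..<N}" "j \<in> {..<N}" "i \<noteq> j"
    have "2 * h \<le> norm ((1/2 + 2 * h * real i) *\<^sub>R z - (1/2 + 2 * h * real j) *\<^sub>R z)"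
    proof -
      have "norm ((1/2 + 2 * h * real i) *\<^sub>R z - (1/2 + 2 * h * real j) *\<^sub>R z)
            = 2 * h * \<bar>real i - real j\<bar>"
      proof -
        have "(1/2 + 2 * h * real i) *\<^sub>R z - (1/2 + 2 * h * real j) *\<^sub>R z
              = (2 * h * (real i - real j)) *\<^sub>R z" by (simp add: algebra_simps)
        then show ?thesis using z h by (simp add: abs_mult)
      qed
      moreover have "1 \<le> \<bar>real i - real j\<bar>" using \<open>i \<noteq> j\<close> by linarith
      ultimately show ?thesis using h by simp
    qed
    moreover have dab: "dist a b < 2 * h" if "w \<in> ball a h" "w \<in> ball b h" for a b w :: 'a
      using that dist_triangle_less_add[of a w h b h] by (simp add: dist_commute)
    ultimately show "F i \<inter> F j = {}"
    proof -
      assume le: "2 * h \<le> norm ((1/2 + 2 * h * real i) *\<^sub>R z - (1/2 + 2 * h * real j) *\<^sub>R z)"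
      show "F i \<inter> F j = {}"
      proof (rule ccontr)
        assume "F i \<inter> F j \<noteq> {}"
        then obtain w where "w \<in> F i" "w \<in> F j" by blast
        then have "dist ((1/2 + 2 * h * real i) *\<^sub>R z) ((1/2 + 2 * h * real j) *\<^sub>R z) < 2 * h"
          unfolding F_def by (rule dab)
        then show False using le by (simp add: dist_norm)
      qed
    qed
  qed
  have "emeasure lborel (\<Union>j\<in>{..<N}. F j) = (\<Sum>j\<in>{..<N}. emeasure lborel (F j))"
  proof (rule sum_emeasure[symmetric])
    show "F ` {..<N} \<subseteq> sets lborel" by (auto simp: F_def)
  qed (use dj in auto)
  also have "\<dots> = ennreal (real N * (v * h ^ DIM('a)))"
    using h by (simp add: F_def emeasure_ball v_def ennreal_of_nat_eq_real_of_nat ennreal_mult'[symmetric])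
  finally have e: "emeasure lborel (\<Union>j\<in>{..<N}. F j) = ennreal (real N * (v * h ^ DIM('a)))" .
  have "v * (min r 2 / 32) ^ (DIM('a) - 1) / 16 \<le> v * h ^ (DIM('a) - 1) / 16"
    using v h r by (intro divide_right_mono mult_left_mono power_mono) (auto simp: h_def)
  also have "\<dots> \<le> real N * (v * h ^ DIM('a))"
  proof -
    have "1 / (16 * h) \<le> real N" using N1 h by (simp add: field_simps)
    then have "1 / 16 \<le> real N * h" using h by (simp add: field_simps)
    moreover have "h ^ DIM('a) = h * h ^ (DIM('a) - 1)"
      by (metis DIM_positive Suc_diff_1 power_Suc)
    ultimately show ?thesis using v h
      by (simp add: mult_right_mono mult.assoc mult.left_commute)
  qed
  finally have "ennreal (v * (min r 2 / 32) ^ (DIM('a) - 1) / 16) \<le> emeasure lborel (\<Union>j\<in>{..<N}. F j)"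
    unfolding e by (rule ennreal_leI)
  also have "\<dots> \<le> emeasure lborel (scone (sph_cap r z))"
  proof (rule emeasure_mono[OF sub])
    have "sph_cap r z \<in> sets (restrict_space borel (sphere (0::'a) 1))"
      using cap_sets[OF z r] by (simp add: sets_sphere_measure)
    then show "scone (sph_cap r z) \<in> sets lborel" using scone_borel by simp
  qed
  finally show ?thesis by (simp add: v_def)
qed


definition onb :: "'a::euclidean_space set \<Rightarrow> bool" where
  "onb B \<longleftrightarrow> finite B \<and> (\<forall>b\<in>B. norm b = 1) \<and> pairwise orthogonal B \<and> span B = UNIV"

lemma onb_inner:
  assumes "onb B" "b \<in> B"
  shows "(\<Sum>c\<in>B. a c *\<^sub>R c) \<bullet> b = a b"
proof -
  have "(\<Sum>c\<in>B. a c *\<^sub>R c) \<bullet> b = (\<Sum>c\<in>B. a c * (c \<bullet> b))" by (simp add: inner_sum_left)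
  also have "\<dots> = a b * (b \<bullet> b)"
    by (rule sum.remove[OF _ assms(2), THEN trans]) (use assms in \<open>auto simp: onb_def pairwise_def orthogonal_def intro!: sum.neutral\<close>)
  also have "b \<bullet> b = 1" using assms by (simp add: onb_def norm_eq_1)
  finally show ?thesis by simp
qed

lemma onb_expand:
  assumes "onb B"
  shows "w = (\<Sum>b\<in>B. (w \<bullet> b) *\<^sub>R b)"
proof -
  define e where "e = w - (\<Sum>b\<in>B. (w \<bullet> b) *\<^sub>R b)"
  have "orthogonal e b" if "b \<in> B" for b
    using onb_inner[OF assms that, of "\<lambda>b. w \<bullet> b"] by (simp add: e_def orthogonal_def inner_diff_left)
  then have "orthogonal e e"
    using assms by (intro orthogonal_to_span[of e B]) (auto simp: onb_def)
  then show ?thesis by (simp add: e_def orthogonal_def)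
qed

lemma onb_norm2:
  assumes "onb B"
  shows "(norm (\<Sum>c\<in>B. a c *\<^sub>R c))\<^sup>2 = (\<Sum>c\<in>B. (a c)\<^sup>2)"
proof -
  have "(norm (\<Sum>c\<in>B. a c *\<^sub>R c))\<^sup>2 = (\<Sum>c\<in>B. a c *\<^sub>R c) \<bullet> (\<Sum>c\<in>B. a c *\<^sub>R c)"
    by (simp add: power2_norm_eq_inner)
  also have "\<dots> = (\<Sum>c\<in>B. a c * ((\<Sum>c\<in>B. a c *\<^sub>R c) \<bullet> c))"
    by (simp add: inner_sum_right inner_commute sum_distrib_left mult.left_commute)
  also have "\<dots> = (\<Sum>c\<in>B. (a c)\<^sup>2)"
    by (rule sum.cong) (use onb_inner[OF assms] in \<open>auto simp: power2_eq_square\<close>)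
  finally show ?thesis .
qed

lemma onb_card:
  fixes B :: "'a::euclidean_space set"
  assumes "onb B"
  shows "card B = DIM('a)"
proof -
  have "0 \<notin> B" using assms by (auto simp: onb_def)
  then have "independent B" using assms pairwise_orthogonal_independent by (auto simp: onb_def)
  then have "dim B = card B" by (rule dim_eq_card_independent)
  moreover have "dim B = dim (UNIV :: 'a set)" using assms dim_span[of B] by (simp add: onb_def)
  moreover have "dim (UNIV :: 'a set) = DIM('a)" by simp
  ultimately show ?thesis by simp
qed

lemma onb_extend:
  fixes S :: "'a::euclidean_space set"
  assumes S: "pairwise orthogonal S" "\<And>s. s \<in> S \<Longrightarrow> norm s = 1"
  obtains B where "S \<subseteq> B" "onb B"
proof -
  obtain U where U: "pairwise orthogonal (S \<union> U)" "span (S \<union> U) = span (S \<union> UNIV)"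
    using orthogonal_extension[OF S(1)] by blast
  define W where "W = (S \<union> U) - {0}"
  have fW: "finite W" using pairwise_orthogonal_imp_finite[OF U(1)] by (simp add: W_def)
  have pW: "pairwise orthogonal W" using U(1) by (auto simp: W_def pairwise_def)
  define B where "B = (\<lambda>x. (1 / norm x) *\<^sub>R x) ` W"
  have SB: "S \<subseteq> B"
  proof
    fix s assume s: "s \<in> S"
    then have "s \<in> W" using S(2)[OF s] by (auto simp: W_def)
    moreover have "(1 / norm s) *\<^sub>R s = s" using S(2)[OF s] by simp
    ultimately show "s \<in> B" unfolding B_def by force
  qed
  have "span B = span W" unfolding B_def by (rule span_image_scale[OF fW]) (auto simp: W_def)
  also have "span W = span (S \<union> U)" unfolding W_def by (simp add: span_delete_0)
  also have "\<dots> = UNIV" using U(2) by (simp add: span_UNIV)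
  finally have spB: "span B = UNIV" .
  have nB: "\<forall>b\<in>B. norm b = 1" by (auto simp: B_def W_def)
  have "pairwise orthogonal B"
    unfolding pairwise_def B_def
  proof (clarify)
    fix x y assume xy: "x \<in> W" "y \<in> W" "(1 / norm x) *\<^sub>R x \<noteq> (1 / norm y) *\<^sub>R y"
    then have "x \<noteq> y" by auto
    then have "orthogonal x y" using pW xy by (auto simp: pairwise_def)
    then show "orthogonal ((1 / norm x) *\<^sub>R x) ((1 / norm y) *\<^sub>R y)"
      by (simp add: orthogonal_clauses)
  qed
  moreover have "finite B" using fW by (simp add: B_def)
  ultimately have "onb B" using spB nB by (simp add: onb_def)
  with SB that show ?thesis by blast
qed

lemma box_cover:
  fixes B :: "'a::euclidean_space set"
  assumes B: "onb B" and h: "0 < h" and \<beta>: "\<And>b. b \<in> B \<Longrightarrow> h \<le> \<beta> b"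
  shows "emeasure lborel {w. \<forall>b\<in>B. \<bar>w \<bullet> b\<bar> \<le> \<beta> b}
     \<le> ennreal ((\<Prod>b\<in>B. 5 * \<beta> b / h) * (unit_ball_vol DIM('a) * (h * sqrt (card B)) ^ DIM('a)))"
proof -
  have fB: "finite B" using B by (simp add: onb_def)
  have cB: "0 < card B" using onb_card[OF B] by simp
  define K where "K b = \<lceil>\<beta> b / h\<rceil>" for b
  define KS where "KS = PiE B (\<lambda>b. {-K b..K b})"
  define g where "g k = (\<Sum>b\<in>B. (h * of_int (k b)) *\<^sub>R b)" for k :: "'a \<Rightarrow> int"
  define R where "R = h * sqrt (card B)"
  have fKS: "finite KS" unfolding KS_def using fB by (simp add: finite_PiE)
  have cover: "{w. \<forall>b\<in>B. \<bar>w \<bullet> b\<bar> \<le> \<beta> b} \<subseteq> (\<Union>k\<in>KS. ball (g k) R)"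
  proof
    fix w assume "w \<in> {w. \<forall>b\<in>B. \<bar>w \<bullet> b\<bar> \<le> \<beta> b}"
    then have wb: "\<And>b. b \<in> B \<Longrightarrow> \<bar>w \<bullet> b\<bar> \<le> \<beta> b" by simp
    define k where "k b = (if b \<in> B then \<lfloor>(w \<bullet> b) / h + 1/2\<rfloor> else undefined)" for b
    have kb: "\<bar>w \<bullet> b - h * of_int (k b)\<bar> \<le> h / 2" if "b \<in> B" for b
    proof -
      have "of_int (k b) \<le> (w \<bullet> b) / h + 1/2" "(w \<bullet> b) / h + 1/2 < of_int (k b) + 1"
        using that floor_correct[of "(w \<bullet> b) / h + 1/2"] by (auto simp: k_def)
      then have "h * of_int (k b) \<le> w \<bullet> b + h / 2" "w \<bullet> b + h/2 < h * of_int (k b) + h"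
        using h by (auto simp: field_simps)
      then show ?thesis unfolding abs_le_iff by linarith
    qed
    have "k \<in> KS"
      unfolding KS_def
    proof (rule PiE_I)
      fix b assume b: "b \<in> B"
      have "- \<beta> b \<le> w \<bullet> b" "w \<bullet> b \<le> \<beta> b" using wb[OF b] by (simp_all add: abs_le_iff)
      then have "(w \<bullet> b) / h \<le> \<beta> b / h" "- \<beta> b / h \<le> (w \<bullet> b) / h"
        using h divide_right_mono[of "- \<beta> b" "w \<bullet> b" h] by (simp_all add: divide_right_mono)
      moreover have "\<beta> b / h \<le> of_int (K b)" by (simp add: K_def)
      ultimately have "(w \<bullet> b) / h + 1/2 < of_int (K b) + 1" "of_int (- K b) \<le> (w \<bullet> b) / h + 1/2"
        by linarith+
      then have "k b \<le> K b" "- K b \<le> k b" using b unfolding k_def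
        by (simp_all add: floor_le_iff le_floor_iff)
      then show "k b \<in> {- K b..K b}" by simp
    next
      fix b assume "b \<notin> B" then show "k b = undefined" by (simp add: k_def)
    qed
    moreover have "w \<in> ball (g k) R"
    proof -
      have "w - g k = (\<Sum>b\<in>B. (w \<bullet> b - h * of_int (k b)) *\<^sub>R b)"
        using onb_expand[OF B, of w] by (simp add: g_def scaleR_diff_left sum_subtractf)
      then have "(norm (w - g k))\<^sup>2 = (\<Sum>b\<in>B. (w \<bullet> b - h * of_int (k b))\<^sup>2)"
        using onb_norm2[OF B] by simp
      also have "\<dots> \<le> (\<Sum>b\<in>B. (h / 2)\<^sup>2)"
      proof (rule sum_mono)
        fix b assume "b \<in> B"
        then have "\<bar>w \<bullet> b - h * of_int (k b)\<bar> \<le> \<bar>h / 2\<bar>" using kb h by simp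
        then show "(w \<bullet> b - h * of_int (k b))\<^sup>2 \<le> (h / 2)\<^sup>2" by (simp only: abs_le_square_iff)
      qed
      also have "\<dots> < R\<^sup>2" using h cB by (simp add: R_def power_mult_distrib power_divide)
      finally have "(norm (w - g k))\<^sup>2 < R\<^sup>2" .
      moreover have "0 \<le> R" using h by (simp add: R_def)
      ultimately have "norm (w - g k) < R" by (meson power2_less_imp_less)
      then show ?thesis by (simp add: dist_norm norm_minus_commute)
    qed
    ultimately show "w \<in> (\<Union>k\<in>KS. ball (g k) R)" by blast
  qed
  have "emeasure lborel {w. \<forall>b\<in>B. \<bar>w \<bullet> b\<bar> \<le> \<beta> b} \<le> emeasure lborel (\<Union>k\<in>KS. ball (g k) R)"
    by (rule emeasure_mono[OF cover]) (auto intro!: borel_open)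
  also have "\<dots> \<le> (\<Sum>k\<in>KS. emeasure lborel (ball (g k) R))"
    by (rule emeasure_subadditive_finite[OF fKS]) auto
  also have "\<dots> = ennreal (real (card KS) * (unit_ball_vol DIM('a) * R ^ DIM('a)))"
    using h by (simp add: emeasure_ball R_def ennreal_of_nat_eq_real_of_nat ennreal_mult'[symmetric])
  also have "real (card KS) \<le> (\<Prod>b\<in>B. 5 * \<beta> b / h)"
  proof -
    have "real (card KS) = (\<Prod>b\<in>B. real (nat (K b - (- K b) + 1)))"
      unfolding KS_def using fB by (simp add: card_PiE)
    also have "\<dots> \<le> (\<Prod>b\<in>B. 5 * \<beta> b / h)"
    proof (rule prod_mono)
      fix b assume b: "b \<in> B"
      have "1 \<le> \<beta> b / h" using \<beta>[OF b] h by simp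
      moreover have "of_int (K b) < \<beta> b / h + 1" unfolding K_def by linarith
      ultimately have "0 \<le> K b" "real_of_int (2 * K b + 1) \<le> 5 * \<beta> b / h" unfolding K_def by linarith+
      then show "0 \<le> real (nat (K b - (- K b) + 1)) \<and> real (nat (K b - (- K b) + 1)) \<le> 5 * \<beta> b / h"
        by simp
    qed
    finally show ?thesis .
  qed
  then have "ennreal (real (card KS) * (unit_ball_vol DIM('a) * R ^ DIM('a)))
      \<le> ennreal ((\<Prod>b\<in>B. 5 * \<beta> b / h) * (unit_ball_vol DIM('a) * R ^ DIM('a)))"
    using h by (intro ennreal_leI mult_right_mono) (auto simp: R_def unit_ball_vol_pos less_imp_le)
  finally show ?thesis by (simp add: R_def)
qed


lemma unit_orth_exists:
  fixes Y :: "'a::euclidean_space set"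
  assumes "dim Y < DIM('a)"
  obtains u where "norm u = 1" "\<And>y. y \<in> span Y \<Longrightarrow> orthogonal u y"
proof -
  obtain x where x: "x \<noteq> 0" "\<And>y. y \<in> span Y \<Longrightarrow> orthogonal x y"
    using orthogonal_to_subspace_exists[OF assms] by blast
  show ?thesis
    by (rule that[of "(1 / norm x) *\<^sub>R x"]) (use x in \<open>auto simp: orthogonal_clauses\<close>)
qed

lemma inner_le_infdist:
  fixes u :: "'a::euclidean_space" and X :: "'a set" and x :: 'a
  assumes u: "norm u = 1" and o: "\<And>v. v \<in> span X \<Longrightarrow> orthogonal u v"
  shows "\<bar>x \<bullet> u\<bar> \<le> infdist x (span X)"
proof -
  have "\<bar>x \<bullet> u\<bar> \<le> dist x a" if a: "a \<in> span X" for a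
  proof -
    have "u \<bullet> a = 0" using o[OF a] by (simp add: orthogonal_def)
    then have "a \<bullet> u = 0" by (simp add: inner_commute)
    then have "x \<bullet> u = (x - a) \<bullet> u" by (simp add: inner_diff_left)
    then have "\<bar>x \<bullet> u\<bar> \<le> norm (x - a) * norm u" using Cauchy_Schwarz_ineq2 by metis
    then show ?thesis using u by (simp add: dist_norm)
  qed
  moreover have "span X \<noteq> {}" using span_zero by blast
  ultimately show ?thesis unfolding infdist_def by (auto intro!: cINF_greatest)
qed

lemma tube_upper:
  fixes z :: "'a::euclidean_space" and X :: "'a set"
  assumes d3: "3 \<le> DIM('a)" and dimX: "dim X + 2 \<le> DIM('a)"
    and z: "norm z = 1" and r: "0 < r" and s: "0 < s" "s \<le> min r 2"
  shows "emeasure lborel (scone (sph_cap r z \<inter> {t. infdist t (span X) < s}))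
     \<le> ennreal (2 * 5 ^ DIM('a) * sqrt (DIM('a)) ^ DIM('a) * unit_ball_vol DIM('a)
                * s\<^sup>2 * (min r 2) ^ (DIM('a) - 3))"
proof -
  define \<rho> where "\<rho> = min r 2"
  define d where "d = DIM('a)"
  have \<rho>: "s \<le> \<rho>" "\<rho> \<le> 2" using s by (auto simp: \<rho>_def)
  have "dim (insert z X) < DIM('a)" using dimX by (simp add: dim_insert)
  then obtain u1 where u1: "norm u1 = 1" "\<And>y. y \<in> span (insert z X) \<Longrightarrow> orthogonal u1 y"
    using unit_orth_exists by blast
  have u1z: "orthogonal u1 z" using u1(2) by (simp add: span_base)
  have u1X: "\<And>v. v \<in> span X \<Longrightarrow> orthogonal u1 v" using u1(2) span_mono[of X "insert z X"] by auto
  have "dim (insert u1 X) < DIM('a)" using dimX by (simp add: dim_insert)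
  then obtain u2 where u2: "norm u2 = 1" "\<And>y. y \<in> span (insert u1 X) \<Longrightarrow> orthogonal u2 y"
    using unit_orth_exists by blast
  have u21: "orthogonal u2 u1" using u2(2) by (simp add: span_base)
  have u2X: "\<And>v. v \<in> span X \<Longrightarrow> orthogonal u2 v" using u2(2) span_mono[of X "insert u1 X"] by auto
  obtain u3 c where u3: "norm u3 = 1" "orthogonal u3 u1" "orthogonal u3 u2" "z = (z \<bullet> u2) *\<^sub>R u2 + c *\<^sub>R u3"
  proof (cases "z - (z \<bullet> u2) *\<^sub>R u2 = 0")
    case True
    have "dim {u1, u2} < DIM('a)"
    proof -
      have "card {u1, u2} \<le> 2" by (simp add: card_insert_if)
      then show ?thesis using d3 dim_le_card'[of "{u1,u2}"] by simp
    qed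
    then obtain u where u: "norm u = 1" "\<And>y. y \<in> span {u1, u2} \<Longrightarrow> orthogonal u y"
      using unit_orth_exists by blast
    show ?thesis
      by (rule that[of u 0]) (use u True in \<open>auto simp: span_base\<close>)
  next
    case False
    define q where "q = z - (z \<bullet> u2) *\<^sub>R u2"
    have a1: "u1 \<bullet> z = 0" using u1z by (simp add: orthogonal_def)
    have a2: "u1 \<bullet> u2 = 0" using u21 by (simp add: orthogonal_def inner_commute)
    have "u1 \<bullet> q = 0" using a1 a2 by (simp add: q_def inner_diff_right)
    then have q1: "q \<bullet> u1 = 0" by (simp add: inner_commute)
    have q2: "q \<bullet> u2 = 0" using u2 by (simp add: q_def inner_diff_left norm_eq_1)
    show ?thesis
    proof (rule that[of "(1 / norm q) *\<^sub>R q" "norm q"])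
      show "norm ((1 / norm q) *\<^sub>R q) = 1" using False by (simp add: q_def)
      show "orthogonal ((1 / norm q) *\<^sub>R q) u1" using q1 by (simp add: orthogonal_def)
      show "orthogonal ((1 / norm q) *\<^sub>R q) u2" using q2 by (simp add: orthogonal_def)
      show "z = (z \<bullet> u2) *\<^sub>R u2 + norm q *\<^sub>R (1 / norm q) *\<^sub>R q" using False by (simp add: q_def)
    qed
  qed
  define S where "S = {u1, u2, u3}"
  have orth_ne: "a \<noteq> b" if "orthogonal a b" "norm a = 1" for a b :: 'a
    using that by (auto simp: orthogonal_def norm_eq_1)
  have ne: "u1 \<noteq> u2" "u1 \<noteq> u3" "u2 \<noteq> u3"
    using orth_ne[OF u21 u2(1)] orth_ne[OF u3(2) u3(1)] orth_ne[OF u3(3) u3(1)] by auto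
  have pS: "pairwise orthogonal S"
    unfolding S_def pairwise_def using u21 u3 by (auto simp: orthogonal_commute)
  have nS: "\<And>x. x \<in> S \<Longrightarrow> norm x = 1" using u1 u2 u3 by (auto simp: S_def)
  obtain B where SB: "S \<subseteq> B" and B: "onb B" by (rule onb_extend[OF pS nS])
  have fB: "finite B" using B by (simp add: onb_def)
  have cardB: "card B = d" using onb_card[OF B] by (simp add: d_def)
  have orthB: "orthogonal b u" if "b \<in> B" "u \<in> S" "b \<notin> S" for b u
    using B that SB unfolding onb_def pairwise_def by (metis subsetD)
  define \<beta> where "\<beta> b = (if b = u1 \<or> b = u2 then s else if b = u3 then 2 else \<rho>)" for b
  have incl: "scone (sph_cap r z \<inter> {t. infdist t (span X) < s}) \<subseteq> {w. \<forall>b\<in>B. \<bar>w \<bullet> b\<bar> \<le> \<beta> b}"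
  proof
    fix w assume "w \<in> scone (sph_cap r z \<inter> {t. infdist t (span X) < s})"
    then obtain t x where w: "w = t *\<^sub>R x" "0 < t" "t \<le> 1" "x \<in> sph_cap r z" "infdist x (span X) < s"
      unfolding scone_def by auto
    have nx: "norm x = 1" using w(4) by (simp add: sph_cap_def)
    have xb: "\<bar>x \<bullet> b\<bar> \<le> \<beta> b" if b: "b \<in> B" for b
    proof -
      consider "b = u1" | "b = u2" | "b = u3" | "b \<notin> S" using S_def by blast
      then show ?thesis
      proof cases
        case 1 then show ?thesis using inner_le_infdist[of u1 X x, OF u1(1) u1X] w(5) by (simp add: \<beta>_def)
      next
        case 2 then show ?thesis using inner_le_infdist[of u2 X x, OF u2(1) u2X] w(5) ne by (simp add: \<beta>_def)
      next
        case 3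
        have "\<bar>x \<bullet> b\<bar> \<le> norm x * norm b" by (rule Cauchy_Schwarz_ineq2)
        then show ?thesis using 3 nx u3(1) ne by (simp add: \<beta>_def)
      next
        case 4
        have "b \<bullet> u2 = 0" "b \<bullet> u3 = 0" using orthB[OF b _ 4] by (auto simp: S_def orthogonal_def)
        then have bz: "b \<bullet> z = 0" by (subst u3(4)) (simp add: inner_add_right)
        have "z \<bullet> b = 0" using bz by (simp add: inner_commute)
        then have "x \<bullet> b = (x - z) \<bullet> b" by (simp add: inner_diff_left)
        then have "\<bar>x \<bullet> b\<bar> \<le> norm (x - z) * norm b" using Cauchy_Schwarz_ineq2 by metis
        also have "\<dots> \<le> \<rho>" using cap_chord[OF z w(4)] B b by (simp add: onb_def \<rho>_def)
        finally show ?thesis using 4 by (auto simp: \<beta>_def S_def)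
      qed
    qed
    show "w \<in> {w. \<forall>b\<in>B. \<bar>w \<bullet> b\<bar> \<le> \<beta> b}"
    proof (clarify)
      fix b assume b: "b \<in> B"
      have "\<bar>w \<bullet> b\<bar> = t * \<bar>x \<bullet> b\<bar>" using w(1,2) by (simp add: abs_mult)
      also have "\<dots> \<le> 1 * \<bar>x \<bullet> b\<bar>" using w(3) by (intro mult_right_mono) auto
      finally show "\<bar>w \<bullet> b\<bar> \<le> \<beta> b" using xb[OF b] by simp
    qed
  qed
  have hb: "\<And>b. b \<in> B \<Longrightarrow> s \<le> \<beta> b" using \<rho> by (auto simp: \<beta>_def)
  have "emeasure lborel (scone (sph_cap r z \<inter> {t. infdist t (span X) < s}))
      \<le> emeasure lborel {w. \<forall>b\<in>B. \<bar>w \<bullet> b\<bar> \<le> \<beta> b}"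
  proof (rule emeasure_mono[OF incl])
    have "{w. \<forall>b\<in>B. \<bar>w \<bullet> b\<bar> \<le> \<beta> b} = (\<Inter>b\<in>B. {w. \<bar>w \<bullet> b\<bar> \<le> \<beta> b})" by auto
    also have "\<dots> \<in> sets borel"
    proof (rule sets.finite_INT)
      show "B \<noteq> {}" using SB by (auto simp: S_def)
    qed (use fB in \<open>auto intro!: borel_closed closed_Collect_le continuous_intros\<close>)
    finally show "{w. \<forall>b\<in>B. \<bar>w \<bullet> b\<bar> \<le> \<beta> b} \<in> sets lborel" by simp
  qed
  also have "\<dots> \<le> ennreal ((\<Prod>b\<in>B. 5 * \<beta> b / s) * (unit_ball_vol DIM('a) * (s * sqrt (card B)) ^ DIM('a)))"
    by (rule box_cover[OF B s(1) hb])
  also have "(\<Prod>b\<in>B. 5 * \<beta> b / s) = (5 / s) ^ d * (s * s * 2 * \<rho> ^ (d - 3))"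
  proof -
    have "(\<Prod>b\<in>B. 5 * \<beta> b / s) = (\<Prod>b\<in>B. 5 / s * \<beta> b)" by simp
    also have "\<dots> = (\<Prod>b\<in>B. 5 / s) * (\<Prod>b\<in>B. \<beta> b)"
      by (rule prod.distrib)
    also have "(\<Prod>b\<in>B. 5 / s) = (5 / s) ^ d" using cardB by simp
    also have "(\<Prod>b\<in>B. \<beta> b) = (\<Prod>b\<in>B - S. \<beta> b) * (\<Prod>b\<in>S. \<beta> b)"
      by (rule prod.subset_diff[OF SB fB])
    also have "(\<Prod>b\<in>S. \<beta> b) = s * s * 2" using ne by (simp add: S_def \<beta>_def)
    also have "(\<Prod>b\<in>B - S. \<beta> b) = (\<Prod>b\<in>B - S. \<rho>)"
      by (rule prod.cong) (auto simp: \<beta>_def S_def)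
    also have "\<dots> = \<rho> ^ (d - 3)"
    proof -
      have "card S = 3" using ne by (simp add: S_def)
      then have "card (B - S) = d - 3" using card_Diff_subset[OF _ SB] cardB by (simp add: S_def)
      then show ?thesis by simp
    qed
    finally show ?thesis by simp
  qed
  also have "(5 / s) ^ d * (s * s * 2 * \<rho> ^ (d - 3)) * (unit_ball_vol DIM('a) * (s * sqrt (card B)) ^ DIM('a))
      = 2 * 5 ^ DIM('a) * sqrt (DIM('a)) ^ DIM('a) * unit_ball_vol DIM('a) * s\<^sup>2 * (min r 2) ^ (DIM('a) - 3)"
    using s cardB unfolding d_def \<rho>_def by (simp add: power_mult_distrib power_divide field_simps power2_eq_square)
  finally show ?thesis .
qed


lemma ennreal_term_le_suminf: "(f J::ennreal) \<le> (\<Sum>i::nat. f i)"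
  using ennreal_suminf_lessD linorder_not_less by blast

lemma dyadic_bound:
  fixes \<rho> \<delta> :: real
  assumes \<rho>: "0 < \<rho>" and \<delta>: "0 \<le> \<delta>"
  shows "inverse (ennreal \<delta>) \<le> ennreal (1 / \<rho>) +
           (\<Sum>j. ennreal (2 ^ Suc j / \<rho>) * indicator {x. x < \<rho> / 2 ^ j} \<delta>)"
proof -
  let ?f = "\<lambda>j. ennreal (2 ^ Suc j / \<rho>) * indicator {x::real. x < \<rho> / 2 ^ j} \<delta>"
  consider "\<rho> \<le> \<delta>" | "\<delta> = 0" | "0 < \<delta>" "\<delta> < \<rho>" using \<delta> by linarith
  then show ?thesis
  proof cases
    case 1
    then have "inverse (ennreal \<delta>) = ennreal (1 / \<delta>)" using \<rho> by (simp add: inverse_ennreal divide_inverse)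
    also have "\<dots> \<le> ennreal (1 / \<rho>)" using 1 \<rho> by (intro ennreal_leI) (simp add: frac_le)
    finally show ?thesis by (simp add: add_increasing2)
  next
    case 2
    have "(\<Sum>j. ?f j) = top"
    proof (rule ccontr)
      assume "(\<Sum>j. ?f j) \<noteq> top"
      then obtain M where M: "(\<Sum>j. ?f j) = ennreal M" "0 \<le> M" by (cases "(\<Sum>j. ?f j)") auto
      obtain J where J: "M * \<rho> < 2 ^ J" using real_arch_pow[of 2 "M * \<rho>"] by auto
      have "?f J = ennreal (2 ^ Suc J / \<rho>)" using 2 \<rho> by (simp add: indicator_def)
      then have "ennreal (2 ^ Suc J / \<rho>) \<le> ennreal M" using ennreal_term_le_suminf[of ?f J] M by simp
      then have "2 ^ Suc J / \<rho> \<le> M" using M(2) by (simp add: ennreal_le_iff)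
      then have "2 ^ Suc J \<le> M * \<rho>" using \<rho> by (simp add: field_simps)
      moreover have "(2::real) ^ Suc J = 2 * 2 ^ J" by simp
      moreover have "(0::real) < 2 ^ J" by simp
      ultimately show False using J by linarith
    qed
    then show ?thesis by simp
  next
    case 3
    have ex: "\<exists>j. \<rho> / 2 ^ Suc j \<le> \<delta>"
    proof -
      obtain j where "\<rho> / \<delta> < 2 ^ j" using real_arch_pow[of 2 "\<rho> / \<delta>"] by auto
      then have "\<rho> / 2 ^ j \<le> \<delta>" using 3 by (simp add: field_simps)
      moreover have "\<rho> / 2 ^ Suc j \<le> \<rho> / 2 ^ j" using \<rho> by (simp add: frac_le)
      ultimately show ?thesis by (meson order_trans)
    qed
    define J where "J = (LEAST j. \<rho> / 2 ^ Suc j \<le> \<delta>)"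
    have J1: "\<rho> / 2 ^ Suc J \<le> \<delta>" unfolding J_def by (rule LeastI_ex[OF ex])
    have J2: "\<delta> < \<rho> / 2 ^ J"
    proof (cases J)
      case 0 then show ?thesis using 3 by simp
    next
      case (Suc J')
      then have "J' < J" by simp
      then have "\<not> \<rho> / 2 ^ Suc J' \<le> \<delta>" unfolding J_def by (rule not_less_Least)
      then show ?thesis using Suc by simp
    qed
    have "inverse (ennreal \<delta>) = ennreal (1 / \<delta>)" using 3 by (simp add: inverse_ennreal divide_inverse)
    also have "\<dots> \<le> ennreal (2 ^ Suc J / \<rho>)"
      using J1 3 \<rho> by (intro ennreal_leI) (simp add: field_simps)
    also have "\<dots> = ?f J" using J2 by (simp add: indicator_def)
    also have "\<dots> \<le> (\<Sum>j. ?f j)" by (rule ennreal_term_le_suminf)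
    finally show ?thesis by (simp add: add_increasing)
  qed
qed

definition Kc :: "nat \<Rightarrow> real" where
  "Kc d = 1 + 128 * 5 ^ d * sqrt d ^ d * 32 ^ (d - 1)"

lemma Kc_pos: "0 < Kc d"
  unfolding Kc_def by (simp add: add_pos_nonneg)

lemma tube_sets:
  fixes z :: "'a::euclidean_space"
  assumes z: "norm z = 1" and r: "0 < r"
  shows "sph_cap r z \<inter> {t. infdist t V < s} \<in> sets (sphere_measure :: 'a measure)"
proof -
  have "{t::'a. infdist t V < s} \<in> sets borel"
    by (intro borel_open open_Collect_less) (auto intro: continuous_intros)
  then have "sph_cap r z \<inter> {t. infdist t V < s} \<in> sets (restrict_space borel (sphere (0::'a) 1))"
    using cap_sets[OF z r] unfolding sets_sphere_measure sphere_sets_iff by auto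
  then show ?thesis by (simp add: sets_sphere_measure)
qed

lemma cap_lower:
  fixes z :: "'a::euclidean_space"
  assumes z: "norm z = 1" and r: "0 < r"
  shows "ennreal ((min r 2 / 32) ^ (DIM('a) - 1) / 16) \<le> emeasure sphere_measure (sph_cap r z)"
proof -
  define v where "v = unit_ball_vol DIM('a)"
  have v: "0 < v" by (simp add: v_def unit_ball_vol_pos)
  have bv: "emeasure lborel (ball (0::'a) 1) = ennreal v" by (simp add: emeasure_ball v_def)
  have "ennreal ((min r 2 / 32) ^ (DIM('a) - 1) / 16)
      = ennreal (v * (min r 2 / 32) ^ (DIM('a) - 1) / 16) / ennreal v"
    using v r by (simp add: divide_ennreal)
  also have "\<dots> \<le> emeasure lborel (scone (sph_cap r z)) / ennreal v"
    by (rule divide_right_mono_ennreal) (use scone_cap_lower[OF z r] in \<open>simp add: v_def\<close>)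
  also have "\<dots> = emeasure sphere_measure (sph_cap r z)"
    using emeasure_sphere_measure[OF cap_sets[OF z r]] bv by simp
  finally show ?thesis .
qed

lemma tube_measure:
  fixes z :: "'a::euclidean_space" and X :: "'a set"
  assumes d3: "3 \<le> DIM('a)" and dimX: "dim X + 2 \<le> DIM('a)"
    and z: "norm z = 1" and r: "0 < r" and s: "0 < s" "s \<le> min r 2"
  shows "emeasure sphere_measure (sph_cap r z \<inter> {t. infdist t (span X) < s})
     \<le> ennreal (2 * 5 ^ DIM('a) * sqrt (DIM('a)) ^ DIM('a) * s\<^sup>2 * (min r 2) ^ (DIM('a) - 3))"
proof -
  define v where "v = unit_ball_vol DIM('a)"
  have v: "0 < v" by (simp add: v_def unit_ball_vol_pos)
  have bv: "emeasure lborel (ball (0::'a) 1) = ennreal v" by (simp add: emeasure_ball v_def)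
  have "emeasure sphere_measure (sph_cap r z \<inter> {t. infdist t (span X) < s})
      = emeasure lborel (scone (sph_cap r z \<inter> {t. infdist t (span X) < s})) / ennreal v"
    using emeasure_sphere_measure[OF tube_sets[OF z r]] bv by simp
  also have "\<dots> \<le> ennreal (2 * 5 ^ DIM('a) * sqrt (DIM('a)) ^ DIM('a) * v * s\<^sup>2 * (min r 2) ^ (DIM('a) - 3)) / ennreal v"
    by (rule divide_right_mono_ennreal) (use tube_upper[OF d3 dimX z r s] in \<open>simp add: v_def\<close>)
  also have "\<dots> = ennreal (2 * 5 ^ DIM('a) * sqrt (DIM('a)) ^ DIM('a) * s\<^sup>2 * (min r 2) ^ (DIM('a) - 3))"
    using v r s by (subst divide_ennreal) (auto simp: field_simps)
  finally show ?thesis .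
qed

lemma cap_integral:
  fixes z :: "'a::euclidean_space" and X :: "'a set"
  assumes d3: "3 \<le> DIM('a)" and dimX: "dim X + 2 \<le> DIM('a)"
    and z: "norm z = 1" and r: "0 < r"
  shows "(\<integral>\<^sup>+t\<in>sph_cap r z. inverse (ennreal (infdist t (span X))) \<partial>sphere_measure)
     \<le> ennreal (Kc DIM('a) / min r 2) * emeasure sphere_measure (sph_cap r z)"
proof -
  define \<rho> where "\<rho> = min r 2"
  define d where "d = DIM('a)"
  define C2 where "C2 = 2 * 5 ^ d * sqrt d ^ d"
  define A where "A = sph_cap r z"
  define \<delta> where "\<delta> t = infdist t (span X)" for t
  define N where "N j = A \<inter> {t. \<delta> t < \<rho> / 2 ^ j}" for j :: nat
  define P where "P = emeasure sphere_measure A"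
  define p0 where "p0 = (\<rho> / 32) ^ (d - 1) / 16"
  have \<rho>: "0 < \<rho>" "\<rho> \<le> 2" using r by (auto simp: \<rho>_def)
  have C2: "0 \<le> C2" by (simp add: C2_def)
  have p0: "0 < p0" using \<rho> by (simp add: p0_def)
  have A: "A \<in> sets sphere_measure" using cap_sets[OF z r] by (simp add: A_def)
  have NS: "N j \<in> sets sphere_measure" for j
    using tube_sets[OF z r] by (simp add: N_def A_def \<delta>_def)
  have P0: "ennreal p0 \<le> P" using cap_lower[OF z r] by (simp add: P_def p0_def \<rho>_def d_def A_def)
  have PN: "emeasure sphere_measure (N j) \<le> ennreal (C2 * (\<rho> / 2 ^ j)\<^sup>2 * \<rho> ^ (d - 3))" for j
  proof -
    have "(1::real) \<le> 2 ^ j" by simp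
    then have "\<rho> * 1 \<le> \<rho> * 2 ^ j" by (rule mult_left_mono) (use \<rho> in auto)
    then have "0 < \<rho> / 2 ^ j" "\<rho> / 2 ^ j \<le> min r 2" using \<rho> by (auto simp: divide_le_eq \<rho>_def[symmetric])
    from tube_measure[OF d3 dimX z r this] show ?thesis
      by (simp add: N_def A_def \<delta>_def C2_def d_def \<rho>_def mult.assoc)
  qed
  define c where "c j = ennreal (2 ^ Suc j / \<rho>)" for j :: nat
  have "(\<integral>\<^sup>+t\<in>A. inverse (ennreal (\<delta> t)) \<partial>sphere_measure)
      \<le> (\<integral>\<^sup>+t. ennreal (1 / \<rho>) * indicator A t + (\<Sum>j. c j * indicator (N j) t) \<partial>sphere_measure)"
  proof (rule nn_integral_mono)
    fix t
    have "inverse (ennreal (\<delta> t)) \<le> ennreal (1 / \<rho>) +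
           (\<Sum>j. ennreal (2 ^ Suc j / \<rho>) * indicator {x. x < \<rho> / 2 ^ j} (\<delta> t))"
      by (rule dyadic_bound[OF \<rho>(1)]) (simp add: \<delta>_def infdist_nonneg)
    then have "indicator A t * inverse (ennreal (\<delta> t)) \<le> indicator A t * (ennreal (1 / \<rho>) +
           (\<Sum>j. ennreal (2 ^ Suc j / \<rho>) * indicator {x. x < \<rho> / 2 ^ j} (\<delta> t)))"
      by (rule mult_left_mono) simp
    also have "\<dots> = ennreal (1 / \<rho>) * indicator A t + (\<Sum>j. c j * indicator (N j) t)"
      by (auto simp: indicator_def N_def c_def)
    finally show "inverse (ennreal (\<delta> t)) * indicator A t
        \<le> ennreal (1 / \<rho>) * indicator A t + (\<Sum>j. c j * indicator (N j) t)"
      by (simp add: mult.commute)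
  qed
  also have "\<dots> = ennreal (1 / \<rho>) * P + (\<Sum>j. c j * emeasure sphere_measure (N j))"
  proof -
    have m1: "(\<lambda>t. ennreal (1 / \<rho>) * indicator A t) \<in> borel_measurable sphere_measure"
      using A by simp
    have m2: "(\<lambda>t. c j * indicator (N j) t) \<in> borel_measurable sphere_measure" for j
      using NS[of j] by simp
    have "(\<integral>\<^sup>+t. ennreal (1 / \<rho>) * indicator A t + (\<Sum>j. c j * indicator (N j) t) \<partial>sphere_measure)
        = (\<integral>\<^sup>+t. ennreal (1 / \<rho>) * indicator A t \<partial>sphere_measure)
          + (\<integral>\<^sup>+t. (\<Sum>j. c j * indicator (N j) t) \<partial>sphere_measure)"
      by (rule nn_integral_add[OF m1]) (use m2 in \<open>auto intro!: borel_measurable_suminf\<close>)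
    also have "(\<integral>\<^sup>+t. (\<Sum>j. c j * indicator (N j) t) \<partial>sphere_measure)
        = (\<Sum>j. \<integral>\<^sup>+t. c j * indicator (N j) t \<partial>sphere_measure)"
      by (rule nn_integral_suminf[OF m2])
    also have "(\<lambda>j. \<integral>\<^sup>+t. c j * indicator (N j) t \<partial>sphere_measure) = (\<lambda>j. c j * emeasure sphere_measure (N j))"
      using NS by (simp add: nn_integral_cmult_indicator)
    also have "(\<integral>\<^sup>+t. ennreal (1 / \<rho>) * indicator A t \<partial>sphere_measure) = ennreal (1 / \<rho>) * P"
      using A by (simp add: nn_integral_cmult_indicator P_def)
    finally show ?thesis .
  qed
  also have "(\<Sum>j. c j * emeasure sphere_measure (N j)) \<le> (\<Sum>j. ennreal (2 * C2 * \<rho> ^ (d - 2) * (1/2) ^ j))"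
  proof (rule suminf_le)
    fix j
    have "c j * emeasure sphere_measure (N j) \<le> c j * ennreal (C2 * (\<rho> / 2 ^ j)\<^sup>2 * \<rho> ^ (d - 3))"
      by (rule mult_left_mono[OF PN]) simp
    also have "\<dots> = ennreal (2 ^ Suc j / \<rho> * (C2 * (\<rho> / 2 ^ j)\<^sup>2 * \<rho> ^ (d - 3)))"
      unfolding c_def using \<rho> C2 by (simp add: ennreal_mult'[symmetric])
    also have "2 ^ Suc j / \<rho> * (C2 * (\<rho> / 2 ^ j)\<^sup>2 * \<rho> ^ (d - 3)) = 2 * C2 * \<rho> ^ (d - 2) * (1/2) ^ j"
    proof -
      have "d - 2 = Suc (d - 3)" using d3 unfolding d_def by simp
      then have "\<rho> ^ (d - 2) = \<rho> * \<rho> ^ (d - 3)" by simp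
      then show ?thesis using \<rho> by (simp add: field_simps power2_eq_square power_divide)
    qed
    finally show "c j * emeasure sphere_measure (N j) \<le> ennreal (2 * C2 * \<rho> ^ (d - 2) * (1/2) ^ j)" .
  qed auto
  also have "(\<Sum>j. ennreal (2 * C2 * \<rho> ^ (d - 2) * (1/2) ^ j)) = ennreal (4 * C2 * \<rho> ^ (d - 2))"
  proof (rule suminf_ennreal_eq)
    show "\<And>j. 0 \<le> 2 * C2 * \<rho> ^ (d - 2) * (1/2) ^ j" using C2 \<rho> by simp
    have "(\<lambda>j. (1/2::real) ^ j) sums 2" using geometric_sums[of "1/2::real"] by simp
    from sums_mult[OF this, of "2 * C2 * \<rho> ^ (d - 2)"]
    show "(\<lambda>j. 2 * C2 * \<rho> ^ (d - 2) * (1/2) ^ j) sums (4 * C2 * \<rho> ^ (d - 2))" by (simp add: mult.assoc)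
  qed
  also have "ennreal (4 * C2 * \<rho> ^ (d - 2)) \<le> ennreal ((Kc d - 1) / \<rho>) * P"
  proof -
    have "4 * C2 * \<rho> ^ (d - 2) = (Kc d - 1) / \<rho> * p0"
    proof -
      have "d - 1 = Suc (d - 2)" using d3 unfolding d_def by simp
      then have "\<rho> ^ (d - 1) = \<rho> * \<rho> ^ (d - 2)" by simp
      moreover have "(\<rho> / 32) ^ (d - 1) = \<rho> ^ (d - 1) / 32 ^ (d - 1)" by (simp add: power_divide)
      ultimately show ?thesis using \<rho> unfolding Kc_def p0_def C2_def
        by (simp add: field_simps)
    qed
    then have "ennreal (4 * C2 * \<rho> ^ (d - 2)) = ennreal ((Kc d - 1) / \<rho>) * ennreal p0"
    proof -
      have "0 \<le> (Kc d - 1) / \<rho>" using \<rho> by (simp add: Kc_def)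
      then have "ennreal ((Kc d - 1) / \<rho> * p0) = ennreal ((Kc d - 1) / \<rho>) * ennreal p0"
        by (rule ennreal_mult')
      then show ?thesis using \<open>4 * C2 * \<rho> ^ (d - 2) = (Kc d - 1) / \<rho> * p0\<close> by simp
    qed
    also have "\<dots> \<le> ennreal ((Kc d - 1) / \<rho>) * P" by (rule mult_left_mono[OF P0]) simp
    finally show ?thesis .
  qed
  finally have "(\<integral>\<^sup>+t\<in>A. inverse (ennreal (\<delta> t)) \<partial>sphere_measure)
      \<le> ennreal (1 / \<rho>) * P + ennreal ((Kc d - 1) / \<rho>) * P" by (simp add: add_left_mono)
  also have "\<dots> = ennreal (Kc d / \<rho>) * P"
  proof -
    have "Kc d - 1 \<ge> 0" by (simp add: Kc_def)
    then have "ennreal (1 / \<rho>) + ennreal ((Kc d - 1) / \<rho>) = ennreal (Kc d / \<rho>)"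
      using \<rho> by (subst ennreal_plus[symmetric]) (auto simp: field_simps)
    then show ?thesis by (metis distrib_right)
  qed
  finally show ?thesis by (simp add: A_def \<delta>_def P_def \<rho>_def d_def)
qed


lemma borel_to_sphere_measurable:
  fixes f :: "'a::euclidean_space \<Rightarrow> 'b::topological_space"
  assumes "f \<in> borel_measurable (borel :: 'a::euclidean_space measure)"
  shows "f \<in> borel_measurable (sphere_measure :: 'a measure)"
proof -
  have "f \<in> borel_measurable (restrict_space borel (sphere (0::'a) 1))"
    using assms by (rule measurable_restrict_space1)
  moreover have "(sphere_measure :: 'a measure) \<rightarrow>\<^sub>M (borel :: 'b measure) = restrict_space borel (sphere (0::'a) 1) \<rightarrow>\<^sub>M (borel :: 'b measure)"
    by (rule measurable_cong_sets) (simp_all add: sets_sphere_measure)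
  ultimately show ?thesis by simp
qed

lemma component_measurable:
  "(\<lambda>y. y i) \<in> borel_measurable (PiM UNIV (\<lambda>_::'n. sphere_measure :: 'a::euclidean_space measure))"
proof -
  have "(\<lambda>y. y i) \<in> PiM UNIV (\<lambda>_::'n. sphere_measure :: 'a measure) \<rightarrow>\<^sub>M sphere_measure"
    by (rule measurable_component_singleton) simp
  moreover have "PiM UNIV (\<lambda>_::'n. sphere_measure :: 'a measure) \<rightarrow>\<^sub>M (sphere_measure :: 'a measure)
      = PiM UNIV (\<lambda>_::'n. sphere_measure :: 'a measure) \<rightarrow>\<^sub>M restrict_space borel (sphere (0::'a) 1)"
    by (rule measurable_cong_sets) (simp_all add: sets_sphere_measure)
  ultimately show ?thesis using measurable_restrict_space2_iff by blast
qed

lemma DetS_measurable: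
  "(\<lambda>y. DetS T y) \<in> borel_measurable (PiM UNIV (\<lambda>_::'n::finite. sphere_measure :: (real^'d) measure))"
proof -
  let ?M = "PiM UNIV (\<lambda>_::'n::finite. sphere_measure :: (real^'d) measure)"
  have e: "(\<lambda>y. (gramS T y) $ i $ j) \<in> borel_measurable ?M" for i j
  proof -
    have "(\<lambda>y. y i \<bullet> y j) \<in> borel_measurable ?M"
      using borel_measurable_inner[OF component_measurable component_measurable] .
    then show ?thesis unfolding gramS_def by simp
  qed
  have "(\<lambda>y. det (gramS T y)) \<in> borel_measurable ?M"
    unfolding det_def using e
    by (intro borel_measurable_sum borel_measurable_times borel_measurable_prod) auto
  then show ?thesis unfolding DetS_def by measurable
qed

lemma ennreal_times_inverse_le1: "0 \<le> a \<Longrightarrow> ennreal a * inverse (ennreal a) \<le> 1"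
proof (cases "a = 0")
  case False
  assume "0 \<le> a"
  then have "0 < a" using False by simp
  then have "ennreal a * inverse (ennreal a) = ennreal a * ennreal (inverse a)"
    by (simp add: inverse_ennreal)
  also have "\<dots> = ennreal (a * inverse a)" by (rule ennreal_mult'[symmetric]) (use \<open>0 < a\<close> in simp)
  finally have "ennreal a * inverse (ennreal a) = ennreal (a * inverse a)" .
  then show ?thesis using \<open>0 < a\<close> by simp
qed simp

lemma inverse_ennreal_mult:
  fixes a b :: real
  assumes "0 \<le> a" "0 \<le> b"
  shows "inverse (ennreal (a * b)) = inverse (ennreal a) * inverse (ennreal b)"
proof (cases "a = 0 \<or> b = 0")
  case True
  have "inverse (ennreal c) \<noteq> 0" for c by simp
  then show ?thesis using True by (auto simp: ennreal_top_mult ennreal_mult_top)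
next
  case False
  then show ?thesis using assms by (simp add: ennreal_mult' ennreal_inverse_mult)
qed

lemma sphere_psf: "product_sigma_finite (\<lambda>_::'n. sphere_measure :: 'a::euclidean_space measure)"
  unfolding product_sigma_finite_def
  using finite_measure_sphere finite_measure.axioms(1) by blast

lemma infdist_measurable_sphere:
  "(\<lambda>t. infdist t V) \<in> borel_measurable (sphere_measure :: 'a::euclidean_space measure)"
  by (rule borel_to_sphere_measurable) (intro borel_measurable_continuous_onI continuous_intros)

lemma fubini_bound:
  fixes x :: "'n::finite \<Rightarrow> real^'d::finite"
  assumes d3: "3 \<le> CARD('d)" and nd: "CARD('n) + 1 \<le> CARD('d)"
    and x: "\<And>i. norm (x i) = 1" and r: "0 < r"
  shows "finite R \<Longrightarrow> R \<inter> T = {} \<Longrightarrow>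
    (\<integral>\<^sup>+y. indicator (PiE UNIV (\<lambda>i. sph_cap r (x i))) y * ennreal (DetS T y)
        * inverse (ennreal (DetS (T \<union> R) y)) \<partial>(PiM UNIV (\<lambda>_::'n. sphere_measure)))
     \<le> ennreal ((Kc CARD('d) / min r 2) ^ card R) *
        emeasure (PiM UNIV (\<lambda>_::'n. sphere_measure)) (PiE UNIV (\<lambda>i. sph_cap r (x i)))"
proof (induction R rule: finite_induct)
  let ?M = "PiM UNIV (\<lambda>_::'n. sphere_measure :: (real^'d) measure)"
  let ?B = "PiE UNIV (\<lambda>i. sph_cap r (x i))"
  have Bs: "?B \<in> sets ?M" by (rule sets_PiM_I_finite) (auto intro: cap_sets[OF x r])
  {
    case empty
    have "(\<integral>\<^sup>+y. indicator ?B y * ennreal (DetS T y) * inverse (ennreal (DetS (T \<union> {}) y)) \<partial>?M)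
        \<le> (\<integral>\<^sup>+y. indicator ?B y \<partial>?M)"
    proof (rule nn_integral_mono)
      fix y :: "'n \<Rightarrow> real^'d"
      have "ennreal (DetS T y) * inverse (ennreal (DetS T y)) \<le> 1"
        using ennreal_times_inverse_le1[of "DetS T y"] DetS_nonneg[of T y] by simp
      then show "indicator ?B y * ennreal (DetS T y) * inverse (ennreal (DetS (T \<union> {}) y)) \<le> indicator ?B y"
        by (auto simp: indicator_def mult.assoc)
    qed
    also have "\<dots> = emeasure ?M ?B" using Bs by simp
    finally show ?case by simp
  }
  {
    case (insert k R)
    let ?K = "Kc CARD('d) / min r 2"
    define I where "I = UNIV - {k}"
    have I: "finite I" "k \<notin> I" and UI: "insert k I = UNIV" by (auto simp: I_def)
    define c where "c i = sph_cap r (x i)" for i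
    define h where "h w = (if \<forall>i\<in>I. w i \<in> c i then 1 else 0 :: ennreal)" for w :: "'n \<Rightarrow> real^'d"
    define W where "W w = ennreal (DetS T w) * inverse (ennreal (DetS (T \<union> R) w))" for w :: "'n \<Rightarrow> real^'d"
    define F where "F y = indicator ?B y * ennreal (DetS T y) * inverse (ennreal (DetS (T \<union> insert k R) y))"
      for y :: "'n \<Rightarrow> real^'d"
    define G where "G y = indicator ?B y * ennreal (DetS T y) * inverse (ennreal (DetS (T \<union> R) y))"
      for y :: "'n \<Rightarrow> real^'d"
    interpret product_sigma_finite "\<lambda>_::'n. sphere_measure :: (real^'d) measure" by (rule sphere_psf)
    have kTR: "k \<notin> T \<union> R" using insert by auto
    have ind: "indicator ?B (w(k := t)) = indicator (c k) t * h w" for w t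
      by (auto simp: indicator_def h_def c_def I_def PiE_iff)
    have DT: "DetS T (w(k := t)) = DetS T w" for w t using kTR by (intro DetS_cong) auto
    have DTR: "DetS (T \<union> R) (w(k := t)) = DetS (T \<union> R) w" for w t using kTR by (intro DetS_cong) auto
    have Fw: "F (w(k := t)) = (h w * W w) * (indicator (c k) t * inverse (ennreal (infdist t (span (w ` (T \<union> R))))))"
      for w t
    proof -
      have S: "T \<union> insert k R - {k} = T \<union> R" using kTR by auto
      have im: "(w(k := t)) ` (T \<union> R) = w ` (T \<union> R)" using kTR by auto
      have "DetS (T \<union> insert k R) (w(k := t)) = infdist t (span (w ` (T \<union> R))) * DetS (T \<union> R) (w(k := t))"
        using DetS_step[of k "T \<union> insert k R" "w(k := t)"] S im by simp
      then have "DetS (T \<union> insert k R) (w(k := t)) = infdist t (span (w ` (T \<union> R))) * DetS (T \<union> R) w"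
        by (simp only: DTR)
      then have "inverse (ennreal (DetS (T \<union> insert k R) (w(k := t))))
          = inverse (ennreal (infdist t (span (w ` (T \<union> R))))) * inverse (ennreal (DetS (T \<union> R) w))"
        by (simp add: inverse_ennreal_mult infdist_nonneg DetS_nonneg)
      then show ?thesis unfolding F_def ind DT W_def by (simp add: ac_simps)
    qed
    have Gw: "G (w(k := t)) = (h w * W w) * indicator (c k) t" for w t
      unfolding G_def ind DT DTR W_def by (simp add: ac_simps)
    have Fm: "F \<in> borel_measurable ?M" unfolding F_def
      using Bs DetS_measurable by measurable
    have Gm: "G \<in> borel_measurable ?M" unfolding G_def
      using Bs DetS_measurable by measurable
    have ck: "c k \<in> sets sphere_measure" unfolding c_def by (rule cap_sets[OF x r])
    have M_eq: "?M = PiM (insert k I) (\<lambda>_. sphere_measure)" using UI by simp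
    have "integral\<^sup>N ?M F = (\<integral>\<^sup>+w. (\<integral>\<^sup>+t. F (w(k := t)) \<partial>sphere_measure) \<partial>PiM I (\<lambda>_. sphere_measure))"
      unfolding M_eq by (rule product_nn_integral_insert[OF I]) (use Fm M_eq in simp)
    also have "\<dots> \<le> (\<integral>\<^sup>+w. (\<integral>\<^sup>+t. ennreal ?K * G (w(k := t)) \<partial>sphere_measure) \<partial>PiM I (\<lambda>_. sphere_measure))"
    proof (rule nn_integral_mono)
      fix w :: "'n \<Rightarrow> real^'d"
      assume wsp: "w \<in> space (PiM I (\<lambda>_. sphere_measure :: (real^'d) measure))"
      have Gt: "(\<lambda>t. G (w(k := t))) \<in> borel_measurable sphere_measure"
        using measurable_comp[OF measurable_component_update[OF wsp I(2)], of G] Gm M_eq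
        by (simp add: comp_def)
      let ?V = "span (w ` (T \<union> R))"
      have mt: "(\<lambda>t. indicator (c k) t * inverse (ennreal (infdist t ?V))) \<in> borel_measurable sphere_measure"
        using ck infdist_measurable_sphere[of ?V] by measurable
      have dimX: "dim (w ` (T \<union> R)) + 2 \<le> DIM(real^'d)"
      proof -
        have "dim (w ` (T \<union> R)) \<le> card (w ` (T \<union> R))" by (rule dim_le_card') simp
        also have "\<dots> \<le> card (T \<union> R)" by (rule card_image_le) simp
        also have "card (T \<union> R) < CARD('n)"
          using kTR by (intro psubset_card_mono) auto
        finally show ?thesis using nd by simp
      qed
      have "(\<integral>\<^sup>+t. F (w(k := t)) \<partial>sphere_measure)
          = h w * W w * (\<integral>\<^sup>+t. indicator (c k) t * inverse (ennreal (infdist t ?V)) \<partial>sphere_measure)"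
        unfolding Fw by (rule nn_integral_cmult[OF mt])
      also have "(\<integral>\<^sup>+t. indicator (c k) t * inverse (ennreal (infdist t ?V)) \<partial>sphere_measure)
          \<le> ennreal ?K * emeasure sphere_measure (c k)"
        using cap_integral[OF _ dimX x r, of k] d3 unfolding c_def by (simp add: mult.commute)
      also have "h w * W w * (ennreal ?K * emeasure sphere_measure (c k))
          = ennreal ?K * (\<integral>\<^sup>+t. G (w(k := t)) \<partial>sphere_measure)"
      proof -
        have "(\<integral>\<^sup>+t. G (w(k := t)) \<partial>sphere_measure) = (h w * W w) * emeasure sphere_measure (c k)"
          unfolding Gw using nn_integral_cmult_indicator[OF ck, of "h w * W w"] by simp
        then show ?thesis by (simp add: ac_simps)
      qed
      also have "\<dots> = (\<integral>\<^sup>+t. ennreal ?K * G (w(k := t)) \<partial>sphere_measure)"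
        by (rule nn_integral_cmult[OF Gt, symmetric])
      finally show "(\<integral>\<^sup>+t. F (w(k := t)) \<partial>sphere_measure) \<le> (\<integral>\<^sup>+t. ennreal ?K * G (w(k := t)) \<partial>sphere_measure)"
        by (simp add: mult_left_mono)
    qed
    also have "\<dots> = (\<integral>\<^sup>+y. ennreal ?K * G y \<partial>?M)"
      unfolding M_eq by (rule product_nn_integral_insert[OF I, symmetric]) (use Gm M_eq in simp)
    also have "\<dots> = ennreal ?K * integral\<^sup>N ?M G" by (rule nn_integral_cmult[OF Gm])
    also have "ennreal ?K * integral\<^sup>N ?M G \<le> ennreal ?K * (ennreal (?K ^ card R) * emeasure ?M ?B)"
    proof (rule mult_left_mono)
      show "integral\<^sup>N ?M G \<le> ennreal (?K ^ card R) * emeasure ?M ?B"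
        using insert.IH insert.prems unfolding G_def[abs_def] by simp
    qed simp
    finally have "integral\<^sup>N ?M F \<le> ennreal ?K * (ennreal (?K ^ card R) * emeasure ?M ?B)"
      by (simp add: mult_left_mono)
    also have "\<dots> = ennreal (?K ^ card (insert k R)) * emeasure ?M ?B"
    proof -
      have K0: "0 \<le> ?K" using Kc_pos[of "CARD('d)"] r by simp
      have "ennreal ?K * ennreal (?K ^ card R) = ennreal (?K * ?K ^ card R)"
        using K0 by (rule ennreal_mult'[symmetric])
      also have "?K * ?K ^ card R = ?K ^ card (insert k R)" using insert.hyps by simp
      finally show ?thesis by (simp add: mult.assoc[symmetric])
    qed
    finally show ?case unfolding F_def[abs_def] by simp
  }
qed


theorem lemma4:
  assumes "CARD('d::finite) \<ge> 3"
    and "CARD('n::finite) \<le> CARD('d) - 1"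
  shows "\<exists>C::real. C > 0 \<and>
           (\<forall>r::real. r > 0 \<longrightarrow>
             (\<forall>x :: 'n \<Rightarrow> real ^ 'd. (\<forall>i. x i \<in> sphere 0 1) \<longrightarrow>
                D r x * ennreal (Det x) < ennreal C))"
proof -
  define K where "K = Kc CARD('d)"
  define C0 where "C0 = (\<Sum>T\<in>Pow (UNIV::'n set). 2 ^ CARD('n) * K ^ card (UNIV - T))"
  have K0: "0 < K" by (simp add: K_def Kc_pos)
  have C0: "0 \<le> C0" unfolding C0_def using K0 by (intro sum_nonneg) simp
  have d3: "3 \<le> CARD('d)" using assms(1) by simp
  have nd: "CARD('n) + 1 \<le> CARD('d)" using assms by simp
  have main: "D r x * ennreal (Det x) \<le> ennreal C0"
    if r: "0 < r" and xs: "\<forall>i. x i \<in> sphere 0 1" for r and x :: "'n \<Rightarrow> real^'d"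
  proof -
    have x: "\<And>i. norm (x i) = 1" using xs by simp
    define \<rho> where "\<rho> = min r 2"
    have \<rho>: "0 < \<rho>" using r by (simp add: \<rho>_def)
    let ?M = "PiM UNIV (\<lambda>_::'n. sphere_measure :: (real^'d) measure)"
    let ?B = "PiE UNIV (\<lambda>i. sph_cap r (x i))"
    interpret product_sigma_finite "\<lambda>_::'n. sphere_measure :: (real^'d) measure" by (rule sphere_psf)
    have Bs: "?B \<in> sets ?M" by (rule sets_PiM_I_finite) (auto intro: cap_sets[OF x r])
    define P where "P = emeasure ?M ?B"
    have P_eq: "P = (\<Prod>i\<in>UNIV. emeasure sphere_measure (sph_cap r (x i)))"
      unfolding P_def by (rule emeasure_PiM) (auto intro: cap_sets[OF x r])
    have P0: "P \<noteq> 0"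
    proof -
      have "emeasure sphere_measure (sph_cap r (x i)) \<noteq> 0" for i
      proof -
        have "0 < (min r 2 / 32) ^ (DIM(real^'d) - 1) / 16" using r by simp
        then have "0 < ennreal ((min r 2 / 32) ^ (DIM(real^'d) - 1) / 16)" by simp
        then show ?thesis using cap_lower[OF x r, of i] by (metis not_le not_gr_zero order.strict_trans1)
      qed
      then show ?thesis unfolding P_eq by simp
    qed
    have Ptop: "P \<noteq> top"
    proof -
      have "emeasure sphere_measure (sph_cap r (x i)) \<noteq> top" for i
        using sphere_measure_le[OF cap_sets[OF x r, of i]] by (metis ennreal_one_less_top le_less_trans less_irrefl top_greatest)
      then show ?thesis unfolding P_eq by (simp add: ennreal_prod_eq_top)
    qed
    define I where "I = (\<integral>\<^sup>+ y\<in>?B. inverse (ennreal (Det y)) \<partial>?M)"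
    have DI: "D r x = I / P" unfolding D_def I_def P_def Let_def by simp
    have mDet: "(\<lambda>y. inverse (ennreal (Det y))) \<in> borel_measurable ?M"
      unfolding Det_DetS using DetS_measurable by measurable
    define c where "c T = 2 ^ CARD('n) * \<rho> ^ card (UNIV - T)" for T :: "'n set"
    have c0: "0 \<le> c T" for T using \<rho> by (simp add: c_def)
    define g where "g T y = indicator ?B y * ennreal (DetS T y) * inverse (ennreal (DetS (T \<union> (UNIV - T)) y))"
      for T :: "'n set" and y
    have gm: "g T \<in> borel_measurable ?M" for T
      unfolding g_def[abs_def] using Bs DetS_measurable by measurable
    have "I * ennreal (Det x) = (\<integral>\<^sup>+ y. (inverse (ennreal (Det y)) * indicator ?B y) * ennreal (Det x) \<partial>?M)"
      unfolding I_def using mDet Bs by (subst nn_integral_multc) auto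
    also have "\<dots> \<le> (\<integral>\<^sup>+ y. (\<Sum>T\<in>Pow UNIV. ennreal (c T) * g T y) \<partial>?M)"
    proof (rule nn_integral_mono)
      fix y :: "'n \<Rightarrow> real^'d"
      show "inverse (ennreal (Det y)) * indicator ?B y * ennreal (Det x) \<le> (\<Sum>T\<in>Pow UNIV. ennreal (c T) * g T y)"
      proof (cases "y \<in> ?B")
        case False then show ?thesis by simp
      next
        case True
        then have yc: "\<And>i. y i \<in> sph_cap r (x i)" by auto
        have "\<forall>i. norm (x i - y i) \<le> \<rho>"
          using cap_chord[OF x yc] by (simp add: \<rho>_def norm_minus_commute)
        then have "Det x \<le> 2 ^ CARD('n) * (\<Sum>T\<in>Pow UNIV. \<rho> ^ card (UNIV - T) * DetS T y)"
          unfolding Det_DetS using DetS_expand[of \<rho> x y] \<rho> by simp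
        also have "\<dots> = (\<Sum>T\<in>Pow UNIV. c T * DetS T y)"
          by (simp add: c_def sum_distrib_left mult.assoc)
        finally have "ennreal (Det x) \<le> ennreal (\<Sum>T\<in>Pow UNIV. c T * DetS T y)" by (rule ennreal_leI)
        also have "\<dots> = (\<Sum>T\<in>Pow UNIV. ennreal (c T) * ennreal (DetS T y))"
          using c0 DetS_nonneg by (subst sum_ennreal[symmetric]) (auto simp: ennreal_mult' intro!: mult_nonneg_nonneg)
        finally have le: "ennreal (Det x) \<le> (\<Sum>T\<in>Pow UNIV. ennreal (c T) * ennreal (DetS T y))" .
        have "inverse (ennreal (Det y)) * indicator ?B y * ennreal (Det x)
            = ennreal (Det x) * inverse (ennreal (DetS UNIV y))" using True by (simp add: Det_DetS mult.commute)
        also have "\<dots> \<le> (\<Sum>T\<in>Pow UNIV. ennreal (c T) * ennreal (DetS T y)) * inverse (ennreal (DetS UNIV y))"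
          by (rule mult_right_mono[OF le]) simp
        also have "\<dots> = (\<Sum>T\<in>Pow UNIV. ennreal (c T) * g T y)"
          using True by (simp add: g_def sum_distrib_right mult.assoc)
        finally show ?thesis .
      qed
    qed
    also have "\<dots> = (\<Sum>T\<in>Pow UNIV. ennreal (c T) * integral\<^sup>N ?M (g T))"
      using gm by (simp add: nn_integral_sum nn_integral_cmult)
    also have "\<dots> \<le> (\<Sum>T\<in>Pow UNIV. ennreal (c T) * (ennreal ((K / \<rho>) ^ card (UNIV - T)) * P))"
    proof (rule sum_mono)
      fix T :: "'n set" assume "T \<in> Pow UNIV"
      have dj: "(UNIV - T) \<inter> T = {}" by blast
      have "integral\<^sup>N ?M (g T) \<le> ennreal ((K / \<rho>) ^ card (UNIV - T)) * P"
        using fubini_bound[where x=x and r=r and R="UNIV - T" and T=T, OF d3 nd x r _ dj]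
        unfolding g_def[abs_def] P_def K_def \<rho>_def by simp
      then show "ennreal (c T) * integral\<^sup>N ?M (g T) \<le> ennreal (c T) * (ennreal ((K / \<rho>) ^ card (UNIV - T)) * P)"
        by (rule mult_left_mono) simp
    qed
    also have "\<dots> = ennreal C0 * P"
    proof -
      have "ennreal (c T) * (ennreal ((K / \<rho>) ^ card (UNIV - T)) * P)
          = ennreal (2 ^ CARD('n) * K ^ card (UNIV - T)) * P" for T
      proof -
        have "ennreal (c T) * ennreal ((K / \<rho>) ^ card (UNIV - T)) = ennreal (c T * (K / \<rho>) ^ card (UNIV - T))"
          using c0 by (rule ennreal_mult'[symmetric])
        also have "c T * (K / \<rho>) ^ card (UNIV - T) = 2 ^ CARD('n) * K ^ card (UNIV - T)"
          using \<rho> by (simp add: c_def power_divide)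
        finally show ?thesis by (simp add: mult.assoc[symmetric])
      qed
      then have "(\<Sum>T\<in>Pow UNIV. ennreal (c T) * (ennreal ((K / \<rho>) ^ card (UNIV - T)) * P))
          = (\<Sum>T\<in>Pow (UNIV::'n set). ennreal (2 ^ CARD('n) * K ^ card (UNIV - T))) * P"
        by (simp add: sum_distrib_right)
      also have "(\<Sum>T\<in>Pow (UNIV::'n set). ennreal (2 ^ CARD('n) * K ^ card (UNIV - T))) = ennreal C0"
        unfolding C0_def using K0 by (subst sum_ennreal) auto
      finally show ?thesis .
    qed
    finally have IP: "I * ennreal (Det x) \<le> ennreal C0 * P" .
    have "D r x * ennreal (Det x) = I * ennreal (Det x) / P"
      unfolding DI by (simp add: ennreal_times_divide mult.commute)
    also have "\<dots> \<le> ennreal C0 * P / P" by (rule divide_right_mono_ennreal[OF IP])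
    also have "\<dots> = ennreal C0" using P0 Ptop by (rule ennreal_mult_divide_eq)
    finally show ?thesis .
  qed
  show ?thesis
  proof (intro exI[of _ "C0 + 1"] conjI allI impI)
    show "0 < C0 + 1" using C0 by simp
    fix r :: real and x :: "'n \<Rightarrow> real^'d"
    assume "0 < r" "\<forall>i. x i \<in> sphere 0 1"
    then have "D r x * ennreal (Det x) \<le> ennreal C0" by (rule main)
    also have "\<dots> < ennreal (C0 + 1)" using C0 by (simp add: ennreal_lessI)
    finally show "D r x * ennreal (Det x) < ennreal (C0 + 1)" .
  qed
qed


end
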